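(* Let $k\ge 2$, $\epsilon>0$ and $0<u\le 2$. For the mechanism $\mathbf Q_{k,\epsilon,d^\ast}$ and its empirical estimator $\hat{\mathbf p}$, $$r_{k,n}^{\ell_u^u}(\mathbf Q_{k,\epsilon,d^\ast},\hat{\mathbf p})=\frac{k}{n^{u/2}}\,C_u\,M(k,\epsilon)^{u/2}+o(n^{-u/2})\quad\text{as } n\to\infty.$$
   Context: Let $\mathcal X=\{1,\dots,k\}$, $\Delta_k$ the probability simplex in $\mathbb R^k$. For $1\le d\le k-1$, let $\mathcal Y_{k,d}=\{y\in\{0,1\}^k:\sum_i y_i=d\}$ and define the mechanism $\mathbf Q_{k,\epsilon,d}(y\mid i)=\frac{e^{\epsilon}y_i+(1-y_i)}{\binom{k-1}{d-1}e^{\epsilon}+\binom{k-1}{d}}$ for $y\in\mathcal Y_{k,d}$, $i\in\mathcal X$. Given $\mathbf p\in\Delta_k$, the privatized samples $Y^{(1)},\dots,Y^{(n)}$ are i.i.d. with distribution $\mathbf m(y)=\sum_i p_i\mathbf Q_{k,\epsilon,d}(y\mid i)$. The empirical estimator is $\hat p_i(y^n)=\frac{(k-1)e^{\epsilon}+\frac{(k-1)(k-d)}{d}}{(k-d)(e^{\epsilon}-1)}\cdot\frac{t_i(y^n)}{n}-\frac{(d-1)e^{\epsilon}+k-d}{(k-d)(e^{\epsilon}-1)}$ with $t_i(y^n)=\sum_{j=1}^n y^{(j)}_i$. For $x\in\mathbb R^k$, $\ell_u^u(x)=\sum_i|x_i|^u$, and $r_{k,n}^{\ell_u^u}(\mathbf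 Q,\hat{\mathbf p})=\sup_{\mathbf p\in\Delta_k}\mathbb E_{Y^n\sim\mathbf m^n}\ell_u^u(\hat{\mathbf p}(Y^n)-\mathbf p)$. Let $C_u=\mathbb E|Z|^u=2^{u/2}\Gamma((u+1)/2)/\sqrt\pi$ for $Z\sim\mathcal N(0,1)$. Let $d^\ast\in\arg\min_{1\le d\le k-1}\frac{(de^{\epsilon}+k-d)^2}{d(k-d)}$ (ties broken arbitrarily) and $M(k,\epsilon)=\frac{(k-1)^2}{k^2(e^{\epsilon}-1)^2}\cdot\frac{(d^\ast e^{\epsilon}+k-d^\ast)^2}{d^\ast(k-d^\ast)}$. *)

theory Defs
  imports "HOL-Analysis.Analysis" "HOL-Library.Landau_Symbols"
begin

definition Yset :: "nat \<Rightarrow> nat \<Rightarrow> (nat \<Rightarrow> nat) set" where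
  "Yset k d = {y \<in> PiE {1..k} (\<lambda>_. {0, 1}). (\<Sum>i\<in>{1..k}. y i) = d}"

definition prob_simplex :: "nat \<Rightarrow> (nat \<Rightarrow> real) set" where
  "prob_simplex k = {p. (\<forall>i\<in>{1..k}. 0 \<le> p i) \<and> (\<Sum>i\<in>{1..k}. p i) = 1}"

definition Qmech :: "nat \<Rightarrow> real \<Rightarrow> nat \<Rightarrow> (nat \<Rightarrow> nat) \<Rightarrow> nat \<Rightarrow> real" where
  "Qmech k eps d y i =
     (exp eps * real (y i) + (1 - real (y i))) /
     (real ((k - 1) choose (d - 1)) * exp eps + real ((k - 1) choose d))"

definition mdist :: "nat \<Rightarrow> real \<Rightarrow> nat \<Rightarrow> (nat \<Rightarrow> real) \<Rightarrow> (nat \<Rightarrow> nat) \<Rightarrow> real" where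
  "mdist k eps d p y = (\<Sum>i\<in>{1..k}. p i * Qmech k eps d y i)"

definition tcount :: "nat \<Rightarrow> (nat \<Rightarrow> nat \<Rightarrow> nat) \<Rightarrow> nat \<Rightarrow> real" where
  "tcount n ys i = (\<Sum>j<n. real (ys j i))"

definition phat :: "nat \<Rightarrow> real \<Rightarrow> nat \<Rightarrow> nat \<Rightarrow> (nat \<Rightarrow> nat \<Rightarrow> nat) \<Rightarrow> nat \<Rightarrow> real" where
  "phat k eps d n ys i =
     ((real k - 1) * exp eps + (real k - 1) * (real k - real d) / real d)
       / ((real k - real d) * (exp eps - 1)) * (tcount n ys i / real n)
     - ((real d - 1) * exp eps + real k - real d) / ((real k - real d) * (exp eps - 1))"

definition lossu :: "nat \<Rightarrow> real \<Rightarrow> (nat \<Rightarrow> real) \<Rightarrow> real" where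
  "lossu k u x = (\<Sum>i\<in>{1..k}. \<bar>x i\<bar> powr u)"

text \<open>Expected loss under p: Y^n i.i.d. with law m, expectation as a finite sum.\<close>
definition exp_loss :: "nat \<Rightarrow> real \<Rightarrow> nat \<Rightarrow> real \<Rightarrow> nat \<Rightarrow> (nat \<Rightarrow> real) \<Rightarrow> real" where
  "exp_loss k eps d u n p =
     (\<Sum>ys\<in>PiE {..<n} (\<lambda>_. Yset k d).
        (\<Prod>j<n. mdist k eps d p (ys j)) * lossu k u (\<lambda>i. phat k eps d n ys i - p i))"

definition risk :: "nat \<Rightarrow> real \<Rightarrow> nat \<Rightarrow> real \<Rightarrow> nat \<Rightarrow> real" where
  "risk k eps d u n = (SUP p\<in>prob_simplex k. exp_loss k eps d u n p)"

definition Cu :: "real \<Rightarrow> real" where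
  "Cu u = 2 powr (u / 2) * Gamma ((u + 1) / 2) / sqrt pi"

definition dobj :: "nat \<Rightarrow> real \<Rightarrow> nat \<Rightarrow> real" where
  "dobj k eps d = (real d * exp eps + real k - real d)^2 / (real d * (real k - real d))"

definition Mconst :: "nat \<Rightarrow> real \<Rightarrow> nat \<Rightarrow> real" where
  "Mconst k eps ds = (real k - 1)^2 / ((real k)^2 * (exp eps - 1)^2) * dobj k eps ds"

end

theory Submission
  imports Defs "HOL-Probability.Probability"
begin


lemma gauss_sub:
  fixes u b :: real assumes u: "u > 0" and b: "b > 0"
  shows "(\<integral>\<^sup>+x. ennreal ((x powr ((u-1)/2) * exp (-x)) * indicator {0..b^2/2} x) \<partial>lborel)
       = (\<integral>\<^sup>+x. ennreal (2 powr ((1-u)/2) * (x powr u * exp (-(x^2)/2)) * indicator {0..b} x) \<partial>lborel)"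
proof -
  have mf: "(\<lambda>x::real. x powr ((u-1)/2) * exp (-x)) \<in> borel_measurable borel"
    by measurable
  have sbm: "set_borel_measurable borel {0..c} (\<lambda>x::real. x powr ((u-1)/2) * exp (-x))" for c
    unfolding set_borel_measurable_def using mf by measurable
  have "(\<integral>\<^sup>+x. ennreal ((x powr ((u-1)/2) * exp (-x)) * indicator {(\<lambda>x. x^2/2) 0..(\<lambda>x. x^2/2) b} x) \<partial>lborel)
     = (\<integral>\<^sup>+x. ennreal (((x^2/2) powr ((u-1)/2) * exp (-(x^2/2))) * x * indicator {0..b} x) \<partial>lborel)"
    by (rule nn_integral_substitution[where g="\<lambda>x. x^2/2" and g'="\<lambda>x. x"])
       (use b in \<open>auto intro!: derivative_eq_intros continuous_intros intro: sbm\<close>)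
  also have "\<dots> = (\<integral>\<^sup>+x. ennreal (2 powr ((1-u)/2) * (x powr u * exp (-(x^2)/2)) * indicator {0..b} x) \<partial>lborel)"
  proof (intro nn_integral_cong)
    fix x :: real
    show "ennreal (((x^2/2) powr ((u-1)/2) * exp (-(x^2/2))) * x * indicator {0..b} x) =
          ennreal (2 powr ((1-u)/2) * (x powr u * exp (-(x^2)/2)) * indicator {0..b} x)"
    proof (cases "x > 0")
      case True
      have "(x^2/2) powr ((u-1)/2) * x = 2 powr ((1-u)/2) * x powr u"
      proof -
        have e1: "(x^2/2) powr ((u-1)/2) = (x^2) powr ((u-1)/2) / 2 powr ((u-1)/2)"
          using True by (simp add: powr_divide)
        have "x^2 = x powr 2" using True by (simp add: powr_numeral)
        then have e2: "(x^2) powr ((u-1)/2) = x powr (u-1)"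
        proof -
          have "(x^2) powr ((u-1)/2) = (x powr 2) powr ((u-1)/2)" using \<open>x^2 = x powr 2\<close> by simp
          also have "\<dots> = x powr (2 * ((u-1)/2))" by (rule powr_powr)
          also have "2 * ((u-1)/2) = u - (1::real)" by simp
          finally show ?thesis .
        qed
        have e3: "2 powr ((1-u)/2) = 1 / 2 powr ((u-1)/2)"
          by (simp add: powr_minus_divide[symmetric] minus_divide_left)
        have e4: "x powr (u-1) * x = x powr u"
          using True by (simp add: powr_diff)
        have pp: "2 powr ((1-u)/2) * 2 powr ((u-1)/2) = (1::real)"
          using e3 by simp
        have pa: "2 powr ((u-1)/2) * (x^2/2) powr ((u-1)/2) = x powr (u-1)"
          using e1 e2 by simp
        have "(x^2/2) powr ((u-1)/2) * x = (x^2/2) powr ((u-1)/2) * x * (2 powr ((1-u)/2) * 2 powr ((u-1)/2))"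
          using pp by simp
        also have "\<dots> = 2 powr ((1-u)/2) * (x * (2 powr ((u-1)/2) * (x^2/2) powr ((u-1)/2)))"
          by (simp add: ac_simps)
        also have "\<dots> = 2 powr ((1-u)/2) * x powr u" using pa e4 by (simp add: mult.commute)
        finally show ?thesis .
      qed
      note eq = this
      have "((x^2/2) powr ((u-1)/2) * exp (-(x^2/2))) * x * indicator {0..b} x
          = ((x^2/2) powr ((u-1)/2) * x) * exp (-(x^2/2)) * indicator {0..b} x"
        by (simp only: ac_simps)
      also have "\<dots> = 2 powr ((1-u)/2) * (x powr u * exp (-(x^2)/2)) * indicator {0..b} x"
        unfolding eq by (simp only: ac_simps minus_divide_left)
      finally show ?thesis by (simp only:)
    next
      case False
      then show ?thesis by (cases "x = 0") (auto simp: indicator_def)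
    qed
  qed
  finally show ?thesis by simp
qed

lemma nn_lim_indicator:
  fixes g :: "real \<Rightarrow> real" and c :: "nat \<Rightarrow> real"
  assumes g: "\<And>x. x \<ge> 0 \<Longrightarrow> g x \<ge> 0" and gm: "g \<in> borel_measurable borel"
    and c: "incseq c" and cl: "filterlim c at_top sequentially"
  shows "(\<lambda>n. \<integral>\<^sup>+x. ennreal (g x * indicator {0..c n} x) \<partial>lborel)
          \<longlonglongrightarrow> (\<integral>\<^sup>+x. ennreal (g x * indicator {0..} x) \<partial>lborel)"
proof (rule nn_integral_LIMSEQ)
  show "incseq (\<lambda>n x. ennreal (g x * indicator {0..c n} x))"
  proof (intro monoI le_funI)
    fix m n :: nat and x :: real assume "m \<le> n"
    then have "c m \<le> c n" using c by (simp add: incseq_def)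
    then show "ennreal (g x * indicator {0..c m} x) \<le> ennreal (g x * indicator {0..c n} x)"
      using g[of x] by (auto simp: indicator_def intro!: ennreal_leI)
  qed
  show "(\<lambda>x. ennreal (g x * indicator {0..c n} x)) \<in> borel_measurable lborel" for n
    using gm by measurable
  fix x :: real
  have "eventually (\<lambda>n. c n \<ge> x) sequentially"
    using cl by (simp add: filterlim_at_top)
  then have "eventually (\<lambda>n. ennreal (g x * indicator {0..c n} x) = ennreal (g x * indicator {0..} x)) sequentially"
    by eventually_elim (auto simp: indicator_def)
  then show "(\<lambda>n. ennreal (g x * indicator {0..c n} x)) \<longlonglongrightarrow> ennreal (g x * indicator {0..} x)"
    by (rule tendsto_eventually)
qed

lemma gauss_half:
  fixes u :: real assumes u: "u > 0"
  shows "(\<integral>\<^sup>+x. ennreal (x powr u * exp (-(x^2)/2) * indicator {0..} x) \<partial>lborel)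
       = ennreal (2 powr ((u-1)/2) * Gamma ((u+1)/2))"
proof -
  define Q :: real where "Q = 2 powr ((1-u)/2)"
  have Q: "Q > 0" by (simp add: Q_def)
  define I where "I = (\<integral>\<^sup>+x. ennreal (x powr u * exp (-(x^2)/2) * indicator {0..} x) \<partial>lborel)"
  have lim1: "(\<lambda>n. \<integral>\<^sup>+x. ennreal ((x powr u * exp (-(x^2)/2)) * indicator {0..real (Suc n)} x) \<partial>lborel)
          \<longlonglongrightarrow> I"
    unfolding I_def
  proof (rule nn_lim_indicator)
    show "filterlim (\<lambda>n. real (Suc n)) at_top sequentially"
      using filterlim_sequentially_Suc[of "\<lambda>n. real n"] filterlim_real_sequentially by simp
  qed (auto simp: incseq_def)
  have lim2: "(\<lambda>n. \<integral>\<^sup>+x. ennreal ((x powr ((u-1)/2) * exp (-x)) * indicator {0..(real (Suc n))^2/2} x) \<partial>lborel)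
          \<longlonglongrightarrow> (\<integral>\<^sup>+x. ennreal ((x powr ((u-1)/2) * exp (-x)) * indicator {0..} x) \<partial>lborel)"
  proof (rule nn_lim_indicator)
    show "incseq (\<lambda>n. (real (Suc n))^2/2)"
      by (auto simp: incseq_def intro!: divide_right_mono power_mono)
    have fS: "filterlim (\<lambda>n. real (Suc n)) at_top sequentially"
      using filterlim_sequentially_Suc[of "\<lambda>n. real n"] filterlim_real_sequentially by simp
    have f2: "filterlim (\<lambda>n. (real (Suc n)) * real (Suc n)) at_top sequentially"
      by (rule filterlim_at_top_mult_at_top[OF fS fS])
    have "filterlim (\<lambda>n. (1/2) * ((real (Suc n)) * real (Suc n))) at_top sequentially"
      by (rule filterlim_tendsto_pos_mult_at_top[OF tendsto_const _ f2]) simp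
    moreover have "(\<lambda>n. (1/2) * ((real (Suc n)) * real (Suc n))) = (\<lambda>n. (real (Suc n))^2/2)"
      by (simp add: power2_eq_square)
    ultimately show "filterlim (\<lambda>n. (real (Suc n))^2/2) at_top sequentially"
      by simp
  qed auto
  have G: "(\<integral>\<^sup>+x. ennreal ((x powr ((u-1)/2) * exp (-x)) * indicator {0..} x) \<partial>lborel) = ennreal (Gamma ((u+1)/2))"
  proof -
    have "Gamma ((u+1)/2) = (\<integral>\<^sup>+t. ennreal (indicator {0..} t * t powr ((u+1)/2 - 1) / exp t) \<partial>lborel)"
      by (rule Gamma_conv_nn_integral_real) (use u in simp)
    also have "\<dots> = (\<integral>\<^sup>+x. ennreal ((x powr ((u-1)/2) * exp (-x)) * indicator {0..} x) \<partial>lborel)"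
    proof (intro nn_integral_cong)
      fix x :: real
      have "(u+1)/2 - 1 = (u-1)/2" by (simp add: field_simps)
      then show "ennreal (indicator {0..} x * x powr ((u+1)/2 - 1) / exp x) = ennreal ((x powr ((u-1)/2) * exp (-x)) * indicator {0..} x)"
        by (simp add: exp_minus field_simps)
    qed
    finally show ?thesis by simp
  qed
  have eqn: "(\<integral>\<^sup>+x. ennreal ((x powr ((u-1)/2) * exp (-x)) * indicator {0..(real (Suc n))^2/2} x) \<partial>lborel)
      = ennreal Q * (\<integral>\<^sup>+x. ennreal ((x powr u * exp (-(x^2)/2)) * indicator {0..real (Suc n)} x) \<partial>lborel)" for n
  proof -
    have "(\<integral>\<^sup>+x. ennreal ((x powr ((u-1)/2) * exp (-x)) * indicator {0..(real (Suc n))^2/2} x) \<partial>lborel)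
      = (\<integral>\<^sup>+x. ennreal (2 powr ((1-u)/2) * (x powr u * exp (-(x^2)/2)) * indicator {0..real (Suc n)} x) \<partial>lborel)"
      by (rule gauss_sub) (use u in auto)
    also have "\<dots> = (\<integral>\<^sup>+x. ennreal Q * ennreal ((x powr u * exp (-(x^2)/2)) * indicator {0..real (Suc n)} x) \<partial>lborel)"
      by (intro nn_integral_cong) (simp add: Q_def ennreal_mult'' mult.assoc)
    also have "\<dots> = ennreal Q * (\<integral>\<^sup>+x. ennreal ((x powr u * exp (-(x^2)/2)) * indicator {0..real (Suc n)} x) \<partial>lborel)"
      by (rule nn_integral_cmult) measurable
    finally show ?thesis .
  qed
  have "(\<lambda>n. ennreal Q * (\<integral>\<^sup>+x. ennreal ((x powr u * exp (-(x^2)/2)) * indicator {0..real (Suc n)} x) \<partial>lborel))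
         \<longlonglongrightarrow> ennreal Q * I"
    by (rule ennreal_tendsto_cmult[OF _ lim1]) simp
  moreover have "(\<lambda>n. ennreal Q * (\<integral>\<^sup>+x. ennreal ((x powr u * exp (-(x^2)/2)) * indicator {0..real (Suc n)} x) \<partial>lborel))
         \<longlonglongrightarrow> ennreal (Gamma ((u+1)/2))"
    using lim2 unfolding eqn G .
  ultimately have QI: "ennreal Q * I = ennreal (Gamma ((u+1)/2))"
    by (rule LIMSEQ_unique)
  have "I = ennreal (1/Q) * (ennreal Q * I)"
    using Q by (simp add: ennreal_mult''[symmetric] mult.assoc[symmetric])
  also have "\<dots> = ennreal (1/Q * Gamma ((u+1)/2))"
    unfolding QI using Q Gamma_real_pos[of "(u+1)/2"] u by (simp add: ennreal_mult[symmetric])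
  also have "1/Q = 2 powr ((u-1)/2)"
    by (simp add: Q_def powr_minus_divide[symmetric] minus_divide_left)
  finally show ?thesis unfolding I_def .
qed

lemma Cu_identity:
  "2 * (1 / sqrt (2 * pi)) * (2 powr ((u-1)/2) * Gamma ((u+1)/2)) = Cu u"
proof -
  have s2: "sqrt 2 = 2 powr (1/2)" by (simp add: powr_half_sqrt)
  have "2 * 2 powr ((u-1)/2) = 2 powr (1 + (u-1)/2)" by (simp add: powr_add)
  also have "\<dots> = 2 powr (u/2) * 2 powr (1/2)"
    by (simp add: powr_add[symmetric] field_simps)
  finally have e: "2 * 2 powr ((u-1)/2) = 2 powr (u/2) * sqrt 2" using s2 by simp
  have "2 * (1 / sqrt (2 * pi)) * (2 powr ((u-1)/2) * Gamma ((u+1)/2))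
      = (2 * 2 powr ((u-1)/2)) * Gamma ((u+1)/2) / (sqrt 2 * sqrt pi)"
    by (simp add: real_sqrt_mult field_simps)
  also have "\<dots> = 2 powr (u/2) * Gamma ((u+1)/2) / sqrt pi"
    unfolding e by simp
  finally show ?thesis by (simp add: Cu_def)
qed

lemma std_abs_moment:
  fixes u :: real assumes u: "u > 0"
  shows "has_bochner_integral std_normal_distribution (\<lambda>x. \<bar>x\<bar> powr u) (Cu u)"
proof -
  define c :: real where "c = 1 / sqrt (2 * pi)"
  have c: "c > 0" by (simp add: c_def)
  define h where "h x = x powr u * exp (-(x^2)/2) * indicator {0..} x" for x :: real
  have h0: "h x \<ge> 0" for x by (simp add: h_def)
  have hm[measurable]: "h \<in> borel_measurable borel" unfolding h_def by measurable
  have pw: "std_normal_density x * \<bar>x\<bar> powr u = c * h x + c * h (-x)" for x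
  proof (cases "x \<ge> 0")
    case True
    then show ?thesis using u by (cases "x = 0") (auto simp: h_def c_def std_normal_density_def indicator_def)
  next
    case False
    then show ?thesis by (auto simp: h_def c_def std_normal_density_def indicator_def)
  qed
  have "(\<integral>\<^sup>+x. ennreal (std_normal_density x * \<bar>x\<bar> powr u) \<partial>lborel)
      = (\<integral>\<^sup>+x. ennreal (c * h x) + ennreal (c * h (-x)) \<partial>lborel)"
    using c h0 by (intro nn_integral_cong) (simp add: pw ennreal_plus)
  also have "\<dots> = (\<integral>\<^sup>+x. ennreal (c * h x) \<partial>lborel) + (\<integral>\<^sup>+x. ennreal (c * h (-x)) \<partial>lborel)"
    by (rule nn_integral_add) measurable
  also have "(\<integral>\<^sup>+x. ennreal (c * h (-x)) \<partial>lborel) = (\<integral>\<^sup>+x. ennreal (c * h x) \<partial>lborel)"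
    using nn_integral_real_affine[of "\<lambda>x. ennreal (c * h x)" "-1" 0] by simp
  also have "(\<integral>\<^sup>+x. ennreal (c * h x) \<partial>lborel) = ennreal c * (\<integral>\<^sup>+x. ennreal (h x) \<partial>lborel)"
    using c by (subst nn_integral_cmult[symmetric]) (auto intro!: nn_integral_cong simp: ennreal_mult h0)
  also have "(\<integral>\<^sup>+x. ennreal (h x) \<partial>lborel) = ennreal (2 powr ((u-1)/2) * Gamma ((u+1)/2))"
    unfolding h_def by (rule gauss_half[OF u])
  finally have "(\<integral>\<^sup>+x. ennreal (std_normal_density x * \<bar>x\<bar> powr u) \<partial>lborel)
       = ennreal (2 * c * (2 powr ((u-1)/2) * Gamma ((u+1)/2)))"
    using c Gamma_real_pos[of "(u+1)/2"] u
    by (simp add: ennreal_mult[symmetric] ennreal_plus[symmetric] del: ennreal_plus)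
  also have "2 * c * (2 powr ((u-1)/2) * Gamma ((u+1)/2)) = Cu u"
    unfolding c_def by (rule Cu_identity)
  finally have nn: "(\<integral>\<^sup>+x. ennreal (std_normal_density x * \<bar>x\<bar> powr u) \<partial>lborel) = ennreal (Cu u)" .
  have Cu0: "Cu u \<ge> 0" using Gamma_real_pos[of "(u+1)/2"] u by (simp add: Cu_def)
  have "has_bochner_integral lborel (\<lambda>x. std_normal_density x * \<bar>x\<bar> powr u) (Cu u)"
    by (rule has_bochner_integral_nn_integral) (use nn Cu0 in auto)
  then show ?thesis
    by (intro has_bochner_integral_density) auto
qed


definition bsum :: "nat \<Rightarrow> real \<Rightarrow> (nat \<Rightarrow> real) \<Rightarrow> real" where
  "bsum n q f = (\<Sum>t\<le>n. real (n choose t) * q^t * (1-q)^(n-t) * f t)"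

lemma bsum_0[simp]: "bsum 0 q f = f 0"
  by (simp add: bsum_def)

lemma bsum_Suc: "bsum (Suc n) q f = q * bsum n q (\<lambda>t. f (Suc t)) + (1-q) * bsum n q f"
proof -
  have "bsum (Suc n) q f = (1-q)^(Suc n) * f 0 +
      (\<Sum>t\<le>n. real (Suc n choose Suc t) * q^(Suc t) * (1-q)^(n-t) * f (Suc t))"
    unfolding bsum_def by (subst sum.atMost_Suc_shift) simp
  also have "(\<Sum>t\<le>n. real (Suc n choose Suc t) * q^(Suc t) * (1-q)^(n-t) * f (Suc t))
     = q * (\<Sum>t\<le>n. real (n choose t) * q^t * (1-q)^(n-t) * f (Suc t))
       + (\<Sum>t\<le>n. real (n choose Suc t) * q^(Suc t) * (1-q)^(n-t) * f (Suc t))"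
    by (simp add: sum_distrib_left sum.distrib[symmetric] algebra_simps)
  also have "(\<Sum>t\<le>n. real (n choose Suc t) * q^(Suc t) * (1-q)^(n-t) * f (Suc t))
      = (1-q) * (\<Sum>t<n. real (n choose Suc t) * q^(Suc t) * (1-q)^(n - Suc t) * f (Suc t))"
  proof -
    have "(\<Sum>t\<le>n. real (n choose Suc t) * q^(Suc t) * (1-q)^(n-t) * f (Suc t))
        = (\<Sum>t<n. real (n choose Suc t) * q^(Suc t) * (1-q)^(n-t) * f (Suc t))"
      by (simp add: lessThan_Suc_atMost[symmetric])
    also have "\<dots> = (\<Sum>t<n. (1-q) * (real (n choose Suc t) * q^(Suc t) * (1-q)^(n - Suc t) * f (Suc t)))"
    proof (intro sum.cong refl)
      fix t assume "t \<in> {..<n}"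
      then have "n - t = Suc (n - Suc t)" by simp
      then show "real (n choose Suc t) * q^(Suc t) * (1-q)^(n-t) * f (Suc t)
          = (1-q) * (real (n choose Suc t) * q^(Suc t) * (1-q)^(n - Suc t) * f (Suc t))"
        by simp
    qed
    finally show ?thesis by (simp add: sum_distrib_left)
  qed
  also have "(1-q)^(Suc n) * f 0 = (1-q) * ((1-q)^n * f 0)" by simp
  also have "bsum n q f = (1-q)^n * f 0 + (\<Sum>t<n. real (n choose Suc t) * q^(Suc t) * (1-q)^(n - Suc t) * f (Suc t))"
  proof (cases n)
    case 0 then show ?thesis by (simp add: bsum_def)
  next
    case (Suc m)
    show ?thesis unfolding bsum_def Suc lessThan_Suc_atMost
      by (subst sum.atMost_Suc_shift) simp
  qed
  ultimately show ?thesis unfolding bsum_def by (simp add: algebra_simps)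
qed

lemma bsum_add: "bsum n q (\<lambda>t. f t + g t) = bsum n q f + bsum n q g"
  by (simp add: bsum_def algebra_simps sum.distrib)

lemma bsum_cmult: "bsum n q (\<lambda>t. c * f t) = c * bsum n q f"
  by (simp add: bsum_def sum_distrib_left algebra_simps)

lemma bsum_diff: "bsum n q (\<lambda>t. f t - g t) = bsum n q f - bsum n q g"
  by (simp add: bsum_def algebra_simps sum_subtractf)

lemma bsum_const: "bsum n q (\<lambda>t. c) = c"
proof (induction n)
  case (Suc n) then show ?case by (simp add: bsum_Suc algebra_simps)
qed simp

lemma bsum_mono:
  assumes "0 \<le> q" "q \<le> 1" "\<And>t. t \<le> n \<Longrightarrow> f t \<le> g t"
  shows "bsum n q f \<le> bsum n q g"
  unfolding bsum_def using assms by (intro sum_mono mult_left_mono) auto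

lemma bsum_nonneg:
  assumes "0 \<le> q" "q \<le> 1" "\<And>t. t \<le> n \<Longrightarrow> 0 \<le> f t"
  shows "0 \<le> bsum n q f"
  using bsum_mono[of q n "\<lambda>_. 0" f] assms by (simp add: bsum_const)

lemma bsum_cong: "(\<And>t. t \<le> n \<Longrightarrow> f t = g t) \<Longrightarrow> bsum n q f = bsum n q g"
  unfolding bsum_def by (intro sum.cong) auto

lemma bsum_mean: "bsum n q (\<lambda>t. real t) = real n * q"
proof (induction n)
  case (Suc n)
  have h1: "bsum n q (\<lambda>t. real (Suc t)) = real n * q + 1"
  proof -
    have "bsum n q (\<lambda>t. real (Suc t)) = bsum n q (\<lambda>t. real t + 1)"
      by (rule bsum_cong) simp
    also have "\<dots> = bsum n q (\<lambda>t. real t) + 1"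
      by (simp only: bsum_add bsum_const)
    finally show ?thesis using Suc.IH by simp
  qed
  show ?case by (simp only: bsum_Suc h1 Suc.IH) (simp add: algebra_simps)
qed simp

lemma bsum_sq: "bsum n q (\<lambda>t. (real t)^2) = real n * q * (1 - q) + (real n * q)^2"
proof (induction n)
  case (Suc n)
  have h2: "bsum n q (\<lambda>t. (real (Suc t))^2) = bsum n q (\<lambda>t. (real t)^2) + 2 * (real n * q) + 1"
  proof -
    have "bsum n q (\<lambda>t. (real (Suc t))^2) = bsum n q (\<lambda>t. (real t)^2 + 2 * real t + 1)"
      by (rule bsum_cong) (simp add: power2_eq_square algebra_simps)
    also have "\<dots> = bsum n q (\<lambda>t. (real t)^2) + 2 * bsum n q (\<lambda>t. real t) + 1"
      by (simp only: bsum_add bsum_cmult bsum_const)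
    finally show ?thesis by (simp only: bsum_mean)
  qed
  show ?case by (simp only: bsum_Suc h2 Suc.IH) (simp add: algebra_simps power2_eq_square)
qed simp

lemma bsum_var: "bsum n q (\<lambda>t. (real t - real n * q)^2) = real n * q * (1 - q)"
proof -
  have "bsum n q (\<lambda>t. (real t - real n * q)^2)
      = bsum n q (\<lambda>t. (real t)^2 + (- 2 * (real n * q)) * real t + (real n * q)^2)"
    by (rule bsum_cong) (simp add: power2_diff algebra_simps)
  also have "\<dots> = bsum n q (\<lambda>t. (real t)^2) + (- 2 * (real n * q)) * bsum n q (\<lambda>t. real t) + (real n * q)^2"
    by (simp only: bsum_add bsum_cmult bsum_const)
  finally show ?thesis by (simp only: bsum_sq bsum_mean) (simp add: power2_eq_square algebra_simps)
qed

lemma bsum_expectation: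
  assumes "0 \<le> q" "q \<le> 1"
  shows "measure_pmf.expectation (binomial_pmf n q) f = bsum n q f"
  using assms by (simp add: expectation_binomial_pmf' bsum_def)


lemma sum_PiE_bsum:
  fixes Y :: "'a set" and w :: "'a \<Rightarrow> real" and g :: "'a \<Rightarrow> nat" and h :: "real \<Rightarrow> real"
  assumes fin: "finite Y" and g1: "\<And>y. y \<in> Y \<Longrightarrow> g y \<le> 1" and w1: "(\<Sum>y\<in>Y. w y) = 1"
  shows "(\<Sum>ys\<in>PiE {..<n} (\<lambda>_. Y). (\<Prod>j<n. w (ys j)) * h (\<Sum>j<n. real (g (ys j))))
         = bsum n (\<Sum>y\<in>Y. w y * real (g y)) (\<lambda>t. h (real t))"
proof (induction n arbitrary: h)
  case 0 show ?case by simp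
next
  case (Suc n)
  define q where "q = (\<Sum>y\<in>Y. w y * real (g y))"
  define P where "P = PiE {..<n} (\<lambda>_. Y)"
  have fP: "finite P" unfolding P_def using fin by (simp add: finite_PiE)
  have eqP: "PiE {..<Suc n} (\<lambda>_. Y) = (\<lambda>(y, g). g(n := y)) ` (Y \<times> P)"
    using PiE_insert_eq[of n "{..<n}" "\<lambda>_. Y"] by (simp add: lessThan_Suc P_def)
  have inj: "inj_on (\<lambda>(y, g). g(n := y)) (Y \<times> P)"
    unfolding P_def by (rule inj_combinator) simp
  define F where "F ys = (\<Prod>j<Suc n. w (ys j)) * h (\<Sum>j<Suc n. real (g (ys j)))" for ys
  have "(\<Sum>ys\<in>PiE {..<Suc n} (\<lambda>_. Y). F ys) = (\<Sum>z\<in>Y \<times> P. F ((\<lambda>(y, g). g(n := y)) z))"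
    unfolding eqP by (rule sum.reindex[OF inj, unfolded comp_def])
  also have "\<dots> = (\<Sum>(y,ys)\<in>Y \<times> P. F (ys(n := y)))"
    by (intro sum.cong) auto
  also have "\<dots> = (\<Sum>y\<in>Y. \<Sum>ys\<in>P. F (ys(n := y)))"
    by (rule sum.cartesian_product[symmetric])
  also have "\<dots> = (\<Sum>y\<in>Y. w y * (\<Sum>ys\<in>P. (\<Prod>j<n. w (ys j)) * h (real (g y) + (\<Sum>j<n. real (g (ys j))))))"
  proof (intro sum.cong refl)
    fix y assume "y \<in> Y"
    have "F (ys(n := y)) = w y * ((\<Prod>j<n. w (ys j)) * h (real (g y) + (\<Sum>j<n. real (g (ys j)))))" for ys
    proof -
      have a: "(\<Prod>j<n. w ((ys(n := y)) j)) = (\<Prod>j<n. w (ys j))"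
        by (intro prod.cong) auto
      have b: "(\<Sum>j<n. real (g ((ys(n := y)) j))) = (\<Sum>j<n. real (g (ys j)))"
        by (intro sum.cong) auto
      show ?thesis unfolding F_def using a b by (simp add: algebra_simps)
    qed
    then show "(\<Sum>ys\<in>P. F (ys(n := y))) = w y * (\<Sum>ys\<in>P. (\<Prod>j<n. w (ys j)) * h (real (g y) + (\<Sum>j<n. real (g (ys j)))))"
      by (simp add: sum_distrib_left)
  qed
  also have "\<dots> = (\<Sum>y\<in>Y. w y * bsum n q (\<lambda>t. h (real (g y) + real t)))"
    unfolding P_def q_def
  proof (intro sum.cong refl)
    fix y
    show "w y * (\<Sum>ys\<in>PiE {..<n} (\<lambda>_. Y). (\<Prod>j<n. w (ys j)) * h (real (g y) + (\<Sum>j<n. real (g (ys j)))))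
        = w y * bsum n (\<Sum>y\<in>Y. w y * real (g y)) (\<lambda>t. h (real (g y) + real t))"
      using Suc.IH[of "\<lambda>s. h (real (g y) + s)"] by simp
  qed
  also have "\<dots> = (\<Sum>y\<in>Y. (w y * real (g y)) * bsum n q (\<lambda>t. h (1 + real t))
                         + (w y - w y * real (g y)) * bsum n q (\<lambda>t. h (real t)))"
  proof (intro sum.cong refl)
    fix y assume "y \<in> Y"
    then have "g y = 0 \<or> g y = 1" using g1 by fastforce
    then show "w y * bsum n q (\<lambda>t. h (real (g y) + real t)) = (w y * real (g y)) * bsum n q (\<lambda>t. h (1 + real t))
                         + (w y - w y * real (g y)) * bsum n q (\<lambda>t. h (real t))"
      by auto
  qed
  also have "\<dots> = q * bsum n q (\<lambda>t. h (1 + real t)) + (1 - q) * bsum n q (\<lambda>t. h (real t))"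
    by (simp add: sum.distrib sum_distrib_right[symmetric] sum_subtractf w1 q_def)
  also have "\<dots> = bsum (Suc n) q (\<lambda>t. h (real t))"
    by (simp add: bsum_Suc)
  finally show ?case unfolding F_def q_def .
qed

lemma card_subsets_containing:
  assumes A: "finite A" and B: "B \<subseteq> A" and Bd: "card B \<le> d"
  shows "card {S. S \<subseteq> A \<and> card S = d \<and> B \<subseteq> S} = (card A - card B) choose (d - card B)"
proof -
  have fB: "finite B" using A B finite_subset by blast
  have "bij_betw (\<lambda>S. S - B) {S. S \<subseteq> A \<and> card S = d \<and> B \<subseteq> S} {T. T \<subseteq> A - B \<and> card T = d - card B}"
  proof (rule bij_betw_byWitness[where f' = "\<lambda>T. T \<union> B"])
    show "\<forall>S\<in>{S. S \<subseteq> A \<and> card S = d \<and> B \<subseteq> S}. S - B \<union> B = S" by auto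
    show "\<forall>T\<in>{T. T \<subseteq> A - B \<and> card T = d - card B}. T \<union> B - B = T" by auto
    show "(\<lambda>S. S - B) ` {S. S \<subseteq> A \<and> card S = d \<and> B \<subseteq> S} \<subseteq> {T. T \<subseteq> A - B \<and> card T = d - card B}"
    proof safe
      fix S assume "S \<subseteq> A" "B \<subseteq> S" "d = card S"
      then show "card (S - B) = card S - card B"
        using A fB by (meson card_Diff_subset finite_subset)
    qed auto
    show "(\<lambda>T. T \<union> B) ` {T. T \<subseteq> A - B \<and> card T = d - card B} \<subseteq> {S. S \<subseteq> A \<and> card S = d \<and> B \<subseteq> S}"
    proof
      fix S assume "S \<in> (\<lambda>T. T \<union> B) ` {T. T \<subseteq> A - B \<and> card T = d - card B}"
      then obtain T where T: "T \<subseteq> A - B" "card T = d - card B" and S: "S = T \<union> B" by auto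
      then have "finite T" using A finite_subset by blast
      then have "card (T \<union> B) = card T + card B"
        using T fB by (subst card_Un_disjoint) auto
      then show "S \<in> {S. S \<subseteq> A \<and> card S = d \<and> B \<subseteq> S}" using T S Bd B by auto
    qed
  qed
  then have "card {S. S \<subseteq> A \<and> card S = d \<and> B \<subseteq> S} = card {T. T \<subseteq> A - B \<and> card T = d - card B}"
    by (rule bij_betw_same_card)
  also have "\<dots> = card (A - B) choose (d - card B)"
    using A by (intro n_subsets) auto
  also have "card (A - B) = card A - card B"
    using A B fB by (simp add: card_Diff_subset)
  finally show ?thesis .
qed

lemma card_subsets_containing_big:
  assumes A: "finite A" and B: "B \<subseteq> A" and Bd: "card B > d"
  shows "card {S. S \<subseteq> A \<and> card S = d \<and> B \<subseteq> S} = 0"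
proof -
  have "{S. S \<subseteq> A \<and> card S = d \<and> B \<subseteq> S} = {}"
  proof safe
    fix S assume "S \<subseteq> A" "B \<subseteq> S" "d = card S"
    then have "card B \<le> card S" using A by (meson card_mono finite_subset)
    then show "S \<in> {}" using Bd \<open>d = card S\<close> by simp
  qed
  then show ?thesis by (metis card.empty)
qed

definition indv :: "nat \<Rightarrow> nat set \<Rightarrow> nat \<Rightarrow> nat" where
  "indv k S = (\<lambda>i. if i \<in> {1..k} then (if i \<in> S then 1 else 0) else undefined)"

lemma indv_bij:
  "bij_betw (indv k) {S. S \<subseteq> {1..k} \<and> card S = d} (Yset k d)"
proof (rule bij_betw_byWitness[where f' = "\<lambda>y. {i\<in>{1..k}. y i = 1}"])
  show "\<forall>S\<in>{S. S \<subseteq> {1..k} \<and> card S = d}. {i \<in> {1..k}. indv k S i = 1} = S"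
    by (auto simp: indv_def)
  show "\<forall>y\<in>Yset k d. indv k {i \<in> {1..k}. y i = 1} = y"
  proof
    fix y assume y: "y \<in> Yset k d"
    then have y1: "y \<in> PiE {1..k} (\<lambda>_. {0,1})" by (simp add: Yset_def)
    show "indv k {i \<in> {1..k}. y i = 1} = y"
    proof
      fix i show "indv k {i \<in> {1..k}. y i = 1} i = y i"
        using y1 by (cases "i \<in> {1..k}") (auto simp: indv_def PiE_def extensional_def Pi_def)
    qed
  qed
  show "indv k ` {S. S \<subseteq> {1..k} \<and> card S = d} \<subseteq> Yset k d"
  proof
    fix y assume "y \<in> indv k ` {S. S \<subseteq> {1..k} \<and> card S = d}"
    then obtain S where S: "S \<subseteq> {1..k}" "d = card S" and yS: "y = indv k S" by auto
    have "(\<Sum>i\<in>{1..k}. indv k S i) = (\<Sum>i\<in>{1..k}. if i \<in> S then 1 else 0)"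
      by (intro sum.cong) (auto simp: indv_def)
    also have "\<dots> = card ({1..k} \<inter> S)" by (simp add: sum.If_cases)
    also have "\<dots> = card S" using S by (simp add: Int_absorb1)
    finally show "y \<in> Yset k d" using S unfolding yS
      by (auto simp: Yset_def indv_def PiE_def extensional_def)
  qed
  show "(\<lambda>y. {i \<in> {1..k}. y i = 1}) ` Yset k d \<subseteq> {S. S \<subseteq> {1..k} \<and> card S = d}"
  proof safe
    fix y assume y: "y \<in> Yset k d"
    then have y1: "y \<in> PiE {1..k} (\<lambda>_. {0,1})" and ys: "(\<Sum>i\<in>{1..k}. y i) = d" by (auto simp: Yset_def)
    have "(\<Sum>i\<in>{1..k}. y i) = (\<Sum>i\<in>{1..k}. if y i = 1 then 1 else 0)"
      using y1 by (intro sum.cong) (auto simp: PiE_def Pi_def)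
    also have "\<dots> = card {i \<in> {1..k}. y i = 1}" by (simp add: sum.If_cases Int_def)
    finally show "card {i \<in> {1..k}. y i = 1} = d" using ys by simp
  qed
qed

lemma finite_Yset: "finite (Yset k d)"
proof -
  have "Yset k d \<subseteq> PiE {1..k} (\<lambda>_. {0,1})" by (auto simp: Yset_def)
  moreover have "finite (PiE {1..k} (\<lambda>_. {0::nat,1}))" by (simp add: finite_PiE)
  ultimately show ?thesis by (rule finite_subset)
qed

lemma Yset_01: "y \<in> Yset k d \<Longrightarrow> i \<in> {1..k} \<Longrightarrow> y i = 0 \<or> y i = 1"
  by (auto simp: Yset_def PiE_def Pi_def)

lemma sum_Yset_reindex:
  "(\<Sum>y\<in>Yset k d. f y) = (\<Sum>S\<in>{S. S \<subseteq> {1..k} \<and> card S = d}. f (indv k S))"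
  using sum.reindex_bij_betw[OF indv_bij, of f k d] by simp

lemma count_Yset_card: "(\<Sum>y\<in>Yset k d. (1::real)) = real (k choose d)"
  using n_subsets[of "{1..k}" d] bij_betw_same_card[OF indv_bij[of k d]] by simp

lemma count_Yset_1:
  assumes i: "i \<in> {1..k}" and d: "d \<ge> 1"
  shows "(\<Sum>y\<in>Yset k d. real (y i)) = real ((k - 1) choose (d - 1))"
proof -
  have "(\<Sum>y\<in>Yset k d. real (y i)) = (\<Sum>S\<in>{S. S \<subseteq> {1..k} \<and> card S = d}. if i \<in> S then 1 else 0)"
    unfolding sum_Yset_reindex using i by (intro sum.cong) (auto simp: indv_def)
  also have "\<dots> = real (card {S. S \<subseteq> {1..k} \<and> card S = d \<and> {i} \<subseteq> S})"
    by (simp add: sum.If_cases Int_def)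
  also have "card {S. S \<subseteq> {1..k} \<and> card S = d \<and> {i} \<subseteq> S} = (k - 1) choose (d - 1)"
    using card_subsets_containing[of "{1..k}" "{i}" d] i d by simp
  finally show ?thesis .
qed

lemma count_Yset_2:
  assumes i: "i \<in> {1..k}" and j: "j \<in> {1..k}" and ij: "i \<noteq> j"
  shows "(\<Sum>y\<in>Yset k d. real (y i) * real (y j)) = (if d \<ge> 2 then real ((k - 2) choose (d - 2)) else 0)"
proof -
  have "(\<Sum>y\<in>Yset k d. real (y i) * real (y j)) = (\<Sum>S\<in>{S. S \<subseteq> {1..k} \<and> card S = d}. if {i,j} \<subseteq> S then 1 else 0)"
    unfolding sum_Yset_reindex using i j by (intro sum.cong) (auto simp: indv_def)
  also have "\<dots> = real (card {S. S \<subseteq> {1..k} \<and> card S = d \<and> {i,j} \<subseteq> S})"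
    by (simp add: sum.If_cases Int_def del: insert_subset)
  also have "\<dots> = (if d \<ge> 2 then real ((k - 2) choose (d - 2)) else 0)"
  proof (cases "d \<ge> 2")
    case True
    then show ?thesis using card_subsets_containing[of "{1..k}" "{i,j}" d] i j ij by (simp add: numeral_2_eq_2)
  next
    case False
    then show ?thesis using card_subsets_containing_big[of "{1..k}" "{i,j}" d] i j ij by simp
  qed
  finally show ?thesis .
qed


locale alg =
  fixes K D e :: real
  assumes D: "D > 0" and D1: "D \<ge> 1" and KD: "K - D > 0" and K1: "K - 1 > 0" and e: "e > 1"
begin

definition "S = D * e + K - D"
definition "P = K - D"
definition "Q = K - 1"
definition "c = e - 1"
definition "A = ((K - 1) * e + (K - 1) * (K - D) / D) / ((K - D) * (e - 1))"
definition "B = ((D - 1) * e + K - D) / ((K - D) * (e - 1))"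
definition "al = e * D / (D * e + K - D)"
definition "be = D * (K - 1 + (e - 1) * (D - 1)) / ((K - 1) * (D * e + K - D))"

lemma S_pos: "S > 0"
proof -
  have "D * e > 0" using D e by simp
  then show ?thesis unfolding S_def using KD by linarith
qed
lemma nz: "D \<noteq> 0" "P \<noteq> 0" "c \<noteq> 0" "Q \<noteq> 0" "S \<noteq> 0" "K \<noteq> 0"
  using D KD K1 e S_pos by (auto simp: P_def Q_def c_def)

lemmas atoms = S_def[symmetric] P_def[symmetric] Q_def[symmetric] c_def[symmetric]

lemma A': "A = (Q * e + Q * P / D) / (P * c)" unfolding A_def atoms ..
lemma B': "B = ((D - 1) * e + P) / (P * c)" unfolding B_def atoms by (simp add: algebra_simps P_def)
lemma al': "al = e * D / S" unfolding al_def atoms ..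
lemma be': "be = D * (Q + c * (D - 1)) / (Q * S)" unfolding be_def atoms ..

lemma A_diff: "A * (al - be) = 1"
proof -
  have "A * (al - be) - 1 = 0"
    unfolding A' al' be' using nz
    by (simp add: field_simps; simp add: S_def P_def Q_def c_def algebra_simps)
  then show ?thesis by simp
qed

lemma A_be: "A * be = B"
proof -
  have "A * be - B = 0"
    unfolding A' be' B' using nz
    by (simp add: field_simps; simp add: S_def P_def Q_def c_def algebra_simps)
  then show ?thesis by simp
qed

lemma qs: "be + (al - be) / K = D / K"
proof -
  have "be + (al - be) / K - D / K = 0"
    unfolding al' be' using nz
    by (simp add: field_simps; simp add: S_def P_def Q_def c_def algebra_simps)
  then show ?thesis by simp
qed

lemma M: "(K - 1)^2 / (K^2 * (e - 1)^2) * ((D * e + K - D)^2 / (D * (K - D)))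
          = A^2 * ((be + (al - be) / K) * (1 - (be + (al - be) / K)))"
proof -
  have "(K - 1)^2 / (K^2 * (e - 1)^2) * ((D * e + K - D)^2 / (D * (K - D)))
          - A^2 * ((D / K) * (1 - (D / K))) = 0"
    unfolding A' atoms using nz
    by (simp add: field_simps power2_eq_square; simp add: S_def P_def Q_def c_def algebra_simps)
  then show ?thesis unfolding qs by simp
qed

lemma den: "Q * r / P * e + Q * r / D = Q * r * S / (D * P)"
proof -
  have "Q * r / P * e + Q * r / D - Q * r * S / (D * P) = 0"
    using nz by (simp add: field_simps; simp add: S_def P_def Q_def c_def algebra_simps)
  then show ?thesis by simp
qed

lemma c_alpha:
  assumes r: "r > 0"
  shows "e * ((K - 1) * r / (K - D)) / ((K - 1) * r / (K - D) * e + (K - 1) * r / D) = al"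
proof -
  have "e * ((K - 1) * r / (K - D)) / ((K - 1) * r / (K - D) * e + (K - 1) * r / D) - al = 0"
    unfolding al' atoms den using nz r
    by (simp add: field_simps; simp add: S_def P_def Q_def c_def algebra_simps)
  then show ?thesis by simp
qed

lemma c_beta:
  assumes r: "r > 0"
  shows "((K - 1) * r / (K - D) + (e - 1) * ((K - 1) * r / (K - D) - r)) / ((K - 1) * r / (K - D) * e + (K - 1) * r / D) = be"
proof -
  have "((K - 1) * r / (K - D) + (e - 1) * ((K - 1) * r / (K - D) - r)) / ((K - 1) * r / (K - D) * e + (K - 1) * r / D) - be = 0"
    unfolding be' atoms den using nz r
    by (simp add: field_simps; simp add: S_def P_def Q_def c_def algebra_simps)
  then show ?thesis by simp
qed

lemma al_lt1: "al < 1" unfolding al' using S_pos KD by (simp add: S_def)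
lemma pos: "D > 0" "P > 0" "c > 0" "Q > 0" "S > 0"
  using D KD K1 e S_pos by (auto simp: P_def Q_def c_def)
lemma be_pos: "be > 0"
proof -
  have "c * (D - 1) \<ge> 0" using pos D1 by simp
  then have "Q + c * (D - 1) > 0" using pos by linarith
  then show ?thesis unfolding be' using pos by simp
qed
lemma A_pos: "A > 0" unfolding A' using pos e by (intro divide_pos_pos add_pos_pos mult_pos_pos) auto

end


lemma binom_facts:
  assumes d1: "1 \<le> d" and dk: "d \<le> k - 1" and k2: "k \<ge> 2"
  shows "(real k - real d) * real ((k-1) choose (d-1)) = (real k - 1) * real ((k-2) choose (d-1))"
    and "real d * real ((k-1) choose d) = (real k - 1) * real ((k-2) choose (d-1))"
    and "(if d \<ge> 2 then real ((k-2) choose (d-2)) else 0) = real ((k-1) choose (d-1)) - real ((k-2) choose (d-1))"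
    and "real ((k-2) choose (d-1)) > 0"
    and "real (k choose d) = real ((k-1) choose (d-1)) + real ((k-1) choose d)"
proof -
  obtain K where K: "k = Suc (Suc K)" using k2 by (metis add_2_eq_Suc le_Suc_ex)
  obtain D where D: "d = Suc D" using d1 by (cases d) auto
  have DK: "D \<le> K" using dk K D by simp
  have "(Suc K - D) * (Suc K choose D) = Suc K * (K choose D)"
    using binomial_absorb_comp[of "Suc K" D] by simp
  then have "real (Suc K - D) * real (Suc K choose D) = real (Suc K) * real (K choose D)"
    by (metis of_nat_mult)
  moreover have "real (Suc K - D) = real k - real d" using K D DK by (simp add: of_nat_diff)
  ultimately show "(real k - real d) * real ((k-1) choose (d-1)) = (real k - 1) * real ((k-2) choose (d-1))"
    using K D by simp
  have "Suc D * (Suc K choose Suc D) = Suc K * (K choose D)"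
    using binomial_absorption[of D "Suc K"] by simp
  then have "real (Suc D) * real (Suc K choose Suc D) = real (Suc K) * real (K choose D)"
    by (metis of_nat_mult)
  then show "real d * real ((k-1) choose d) = (real k - 1) * real ((k-2) choose (d-1))"
    using K D by simp
  show "(if d \<ge> 2 then real ((k-2) choose (d-2)) else 0) = real ((k-1) choose (d-1)) - real ((k-2) choose (d-1))"
  proof (cases D)
    case 0 then show ?thesis using K D by simp
  next
    case (Suc E)
    then show ?thesis using K D by simp
  qed
  show "real ((k-2) choose (d-1)) > 0" using K D DK by simp
  show "real (k choose d) = real ((k-1) choose (d-1)) + real ((k-1) choose d)"
    using K D by simp
qed

definition fn :: "real \<Rightarrow> nat \<Rightarrow> real \<Rightarrow> real" where
  "fn u n q = bsum n q (\<lambda>t. \<bar>(real t - real n * q) / sqrt (real n)\<bar> powr u)"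

locale model =
  fixes k d :: nat and eps :: real
  assumes k2: "k \<ge> 2" and d1: "1 \<le> d" and dk: "d \<le> k - 1" and eps: "eps > 0"
begin

sublocale alg "real k" "real d" "exp eps"
  using k2 d1 dk eps by unfold_locales auto

abbreviation "e \<equiv> exp eps"

lemma phat_AB: "phat k eps d n ys i = A * (tcount n ys i / real n) - B"
  by (simp add: phat_def A_def B_def)
definition "r = real ((k-2) choose (d-1))"
definition "c1 = real ((k-1) choose (d-1))"
definition "c0 = real ((k-1) choose d)"
definition "c2 = (if d \<ge> 2 then real ((k-2) choose (d-2)) else 0)"
definition "Z0 = c1 * e + c0"

lemma e1: "e > 1" using eps by simp
lemma r_pos: "r > 0" unfolding r_def using binom_facts(4)[OF d1 dk k2] .
lemma kd: "real k - real d > 0" using dk k2 by linarith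
lemma dpos: "real d > 0" using d1 by simp
lemma c1_eq: "c1 = (real k - 1) * r / (real k - real d)"
  using binom_facts(1)[OF d1 dk k2] kd unfolding c1_def r_def by (simp add: field_simps)
lemma c0_eq: "c0 = (real k - 1) * r / real d"
  using binom_facts(2)[OF d1 dk k2] dpos unfolding c0_def r_def by (simp add: field_simps)
lemma c2_eq: "c2 = c1 - r"
  using binom_facts(3)[OF d1 dk k2] unfolding c2_def c1_def r_def by simp
lemma Z0_c: "Z0 = (e - 1) * c1 + real (k choose d)"
  using binom_facts(5)[OF d1 dk k2] unfolding Z0_def c1_def c0_def by (simp add: algebra_simps)

lemma Z0_pos: "Z0 > 0"
proof -
  have "c1 > 0" "c0 > 0" unfolding c1_eq c0_eq using r_pos kd dpos k2 by auto
  then show ?thesis unfolding Z0_def using e1 by (simp add: add_pos_pos)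
qed

lemma alph_eq: "e * c1 / Z0 = al"
  unfolding Z0_def c1_eq c0_eq by (rule c_alpha[OF r_pos])

lemma bet_eq: "(c1 + (e - 1) * c2) / Z0 = be"
  unfolding Z0_def c2_eq c1_eq c0_eq by (rule c_beta[OF r_pos])

lemma Qmech_eq: "Qmech k eps d y j = (e * real (y j) + (1 - real (y j))) / Z0"
  unfolding Qmech_def Z0_def c1_def c0_def by simp

lemma Qmech_nonneg: "y \<in> Yset k d \<Longrightarrow> j \<in> {1..k} \<Longrightarrow> Qmech k eps d y j \<ge> 0"
  unfolding Qmech_eq using Yset_01[of y k d j] Z0_pos e1 by auto

lemma mdist_nonneg: "p \<in> prob_simplex k \<Longrightarrow> y \<in> Yset k d \<Longrightarrow> mdist k eps d p y \<ge> 0"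
  unfolding mdist_def prob_simplex_def using Qmech_nonneg by (auto intro!: sum_nonneg)

lemma sumQ_yi:
  assumes y: "i \<in> {1..k}" and j: "j \<in> {1..k}"
  shows "(\<Sum>y\<in>Yset k d. Qmech k eps d y j * real (y i))
     = (e * (\<Sum>y\<in>Yset k d. real (y j) * real (y i)) + (\<Sum>y\<in>Yset k d. real (y i))
         - (\<Sum>y\<in>Yset k d. real (y j) * real (y i))) / Z0"
proof -
  have "(\<Sum>y\<in>Yset k d. Qmech k eps d y j * real (y i))
      = (\<Sum>y\<in>Yset k d. (e * (real (y j) * real (y i)) + real (y i) - real (y j) * real (y i)) / Z0)"
    unfolding Qmech_eq by (intro sum.cong) (auto simp: algebra_simps)
  also have "\<dots> = (\<Sum>y\<in>Yset k d. e * (real (y j) * real (y i)) + real (y i) - real (y j) * real (y i)) / Z0"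
    by (simp add: sum_divide_distrib)
  also have "(\<Sum>y\<in>Yset k d. e * (real (y j) * real (y i)) + real (y i) - real (y j) * real (y i))
      = e * (\<Sum>y\<in>Yset k d. real (y j) * real (y i)) + (\<Sum>y\<in>Yset k d. real (y i))
         - (\<Sum>y\<in>Yset k d. real (y j) * real (y i))"
    by (simp add: sum.distrib sum_subtractf sum_distrib_left)
  finally show ?thesis .
qed

lemma G_same:
  assumes i: "i \<in> {1..k}"
  shows "(\<Sum>y\<in>Yset k d. Qmech k eps d y i * real (y i)) = al"
proof -
  have sq: "(\<Sum>y\<in>Yset k d. real (y i) * real (y i)) = (\<Sum>y\<in>Yset k d. real (y i))"
    using Yset_01[of _ k d i] i by (intro sum.cong) fastforce+
  show ?thesis unfolding sumQ_yi[OF i i] sq count_Yset_1[OF i d1] alph_eq[symmetric] c1_def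
    by simp
qed

lemma G_diff:
  assumes i: "i \<in> {1..k}" and j: "j \<in> {1..k}" and ij: "j \<noteq> i"
  shows "(\<Sum>y\<in>Yset k d. Qmech k eps d y j * real (y i)) = be"
proof -
  have "(\<Sum>y\<in>Yset k d. real (y j) * real (y i)) = c2"
    unfolding c2_def using count_Yset_2[OF j i ij, of d] by simp
  then show ?thesis unfolding sumQ_yi[OF i j] count_Yset_1[OF i d1] bet_eq[symmetric] c1_def[symmetric]
    by (simp add: algebra_simps)
qed

lemma mdist_swap:
  "(\<Sum>y\<in>Yset k d. mdist k eps d p y * f y) = (\<Sum>j\<in>{1..k}. p j * (\<Sum>y\<in>Yset k d. Qmech k eps d y j * f y))"
proof -
  have "(\<Sum>y\<in>Yset k d. mdist k eps d p y * f y) = (\<Sum>y\<in>Yset k d. \<Sum>j\<in>{1..k}. p j * (Qmech k eps d y j * f y))"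
    unfolding mdist_def by (simp add: sum_distrib_right mult.assoc)
  also have "\<dots> = (\<Sum>j\<in>{1..k}. \<Sum>y\<in>Yset k d. p j * (Qmech k eps d y j * f y))"
    by (rule sum.swap)
  finally show ?thesis by (simp add: sum_distrib_left)
qed

lemma q_formula:
  assumes p: "p \<in> prob_simplex k" and i: "i \<in> {1..k}"
  shows "(\<Sum>y\<in>Yset k d. mdist k eps d p y * real (y i)) = be + (al - be) * p i"
proof -
  have ps: "(\<Sum>j\<in>{1..k}. p j) = 1" using p by (simp add: prob_simplex_def)
  have "(\<Sum>y\<in>Yset k d. mdist k eps d p y * real (y i)) = (\<Sum>j\<in>{1..k}. p j * (\<Sum>y\<in>Yset k d. Qmech k eps d y j * real (y i)))"
    by (rule mdist_swap)
  also have "\<dots> = p i * al + (\<Sum>j\<in>{1..k} - {i}. p j * be)"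
    using i by (simp add: sum.remove G_same G_diff)
  also have "(\<Sum>j\<in>{1..k} - {i}. p j * be) = (1 - p i) * be"
    using i ps by (simp add: sum_distrib_right[symmetric] sum_diff1)
  finally show ?thesis by (simp add: algebra_simps)
qed

lemma mdist_sum1:
  assumes p: "p \<in> prob_simplex k"
  shows "(\<Sum>y\<in>Yset k d. mdist k eps d p y) = 1"
proof -
  have ps: "(\<Sum>j\<in>{1..k}. p j) = 1" using p by (simp add: prob_simplex_def)
  have "(\<Sum>y\<in>Yset k d. mdist k eps d p y) = (\<Sum>y\<in>Yset k d. mdist k eps d p y * 1)" by simp
  also have "\<dots> = (\<Sum>j\<in>{1..k}. p j * (\<Sum>y\<in>Yset k d. Qmech k eps d y j * 1))"
    by (rule mdist_swap)
  also have "\<dots> = (\<Sum>j\<in>{1..k}. p j)"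
  proof (intro sum.cong refl)
    fix j assume j: "j \<in> {1..k}"
    have "(\<Sum>y\<in>Yset k d. Qmech k eps d y j * 1) = (\<Sum>y\<in>Yset k d. ((e - 1) * real (y j) + 1) / Z0)"
      unfolding Qmech_eq by (intro sum.cong) (auto simp: algebra_simps)
    also have "\<dots> = ((e - 1) * (\<Sum>y\<in>Yset k d. real (y j)) + (\<Sum>y\<in>Yset k d. 1)) / Z0"
      by (simp add: sum_divide_distrib[symmetric] sum.distrib sum_distrib_left)
    also have "\<dots> = 1"
      unfolding count_Yset_1[OF j d1] count_Yset_card using Z0_pos by (simp add: Z0_c c1_def)
    finally show "p j * (\<Sum>y\<in>Yset k d. Qmech k eps d y j * 1) = p j" by simp
  qed
  finally show ?thesis using ps by simp
qed

lemma loss_term: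
  assumes n: "n \<ge> 1" and q: "A * q - B = pp"
  shows "\<bar>A * (real t / real n) - B - pp\<bar> powr u
       = A powr u * real n powr (- u / 2) * \<bar>(real t - real n * q) / sqrt (real n)\<bar> powr u"
proof -
  have nr: "real n > 0" using n by simp
  have ppq: "pp = A * q - B" using q by simp
  have "A * (real t / real n) - B - pp = A * ((real t - real n * q) / real n)"
    unfolding ppq using nr by (simp add: field_simps)
  then have 1: "\<bar>A * (real t / real n) - B - pp\<bar> powr u = A powr u * (\<bar>real t - real n * q\<bar> powr u / real n powr u)"
    using A_pos nr by (simp add: abs_mult powr_mult powr_divide)
  have 2: "real n powr u = real n powr (u / 2) * real n powr (u / 2)"
    by (simp add: powr_add[symmetric])
  have 3: "\<bar>(real t - real n * q) / sqrt (real n)\<bar> powr u = \<bar>real t - real n * q\<bar> powr u / real n powr (u / 2)"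
  proof -
    have "sqrt (real n) powr u = real n powr (u / 2)"
      using nr by (simp add: powr_half_sqrt[symmetric] powr_powr)
    then show ?thesis by (simp add: abs_divide powr_divide)
  qed
  show ?thesis unfolding 1 2 3 using nr by (simp add: powr_minus field_simps)
qed

lemma exp_loss_eq:
  assumes p: "p \<in> prob_simplex k" and n: "n \<ge> 1"
  shows "exp_loss k eps d u n p = A powr u * real n powr (- u / 2) * (\<Sum>i\<in>{1..k}. fn u n (be + (al - be) * p i))"
proof -
  have "exp_loss k eps d u n p = (\<Sum>i\<in>{1..k}. \<Sum>ys\<in>PiE {..<n} (\<lambda>_. Yset k d).
        (\<Prod>j<n. mdist k eps d p (ys j)) * \<bar>A * (tcount n ys i / real n) - B - p i\<bar> powr u)"
    unfolding exp_loss_def lossu_def phat_AB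
    by (simp add: sum_distrib_left) (rule sum.swap)
  also have "\<dots> = (\<Sum>i\<in>{1..k}. bsum n (be + (al - be) * p i) (\<lambda>t. \<bar>A * (real t / real n) - B - p i\<bar> powr u))"
  proof (intro sum.cong refl)
    fix i assume i: "i \<in> {1..k}"
    have "(\<Sum>ys\<in>PiE {..<n} (\<lambda>_. Yset k d). (\<Prod>j<n. mdist k eps d p (ys j)) * (\<lambda>s. \<bar>A * (s / real n) - B - p i\<bar> powr u) (\<Sum>j<n. real ((\<lambda>y. y i) (ys j))))
        = bsum n (\<Sum>y\<in>Yset k d. mdist k eps d p y * real ((\<lambda>y. y i) y)) (\<lambda>t. (\<lambda>s. \<bar>A * (s / real n) - B - p i\<bar> powr u) (real t))"
      by (rule sum_PiE_bsum[OF finite_Yset]) (use Yset_01[of _ k d i] i mdist_sum1[OF p] in fastforce)+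
    then show "(\<Sum>ys\<in>PiE {..<n} (\<lambda>_. Yset k d). (\<Prod>j<n. mdist k eps d p (ys j)) * \<bar>A * (tcount n ys i / real n) - B - p i\<bar> powr u)
        = bsum n (be + (al - be) * p i) (\<lambda>t. \<bar>A * (real t / real n) - B - p i\<bar> powr u)"
      unfolding q_formula[OF p i] tcount_def by simp
  qed
  also have "\<dots> = (\<Sum>i\<in>{1..k}. A powr u * real n powr (- u / 2) * fn u n (be + (al - be) * p i))"
  proof (intro sum.cong refl)
    fix i assume i: "i \<in> {1..k}"
    have hq: "A * (be + (al - be) * p i) - B = p i"
      using A_diff A_be by (simp add: algebra_simps)
    show "bsum n (be + (al - be) * p i) (\<lambda>t. \<bar>A * (real t / real n) - B - p i\<bar> powr u)
        = A powr u * real n powr (- u / 2) * fn u n (be + (al - be) * p i)"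
      unfolding fn_def bsum_cmult[symmetric] by (rule bsum_cong) (rule loss_term[OF n hq])
  qed
  finally show ?thesis by (simp add: sum_distrib_left)
qed

end


definition bmeas :: "nat \<Rightarrow> real \<Rightarrow> real measure" where
  "bmeas n q = distr (measure_pmf (binomial_pmf n q)) borel (\<lambda>t. (real t - real n * q) / sqrt (real n))"

lemma bmeas_real_distribution: "real_distribution (bmeas n q)"
  unfolding bmeas_def
  by (rule prob_space.real_distribution_distr[OF prob_space_measure_pmf]) simp

lemma bmeas_integral:
  assumes q: "0 \<le> q" "q \<le> 1" and g: "g \<in> borel_measurable borel"
  shows "integral\<^sup>L (bmeas n q) g = bsum n q (\<lambda>t. g ((real t - real n * q) / sqrt (real n)))"
  unfolding bmeas_def using q g by (simp add: integral_distr bsum_expectation)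

lemma bmeas_integrable:
  fixes g :: "real \<Rightarrow> 'b::{banach, second_countable_topology}"
  assumes q: "0 \<le> q" "q \<le> 1" and g: "g \<in> borel_measurable borel"
  shows "integrable (bmeas n q) g"
  unfolding bmeas_def using q g
  by (subst integrable_distr_eq) (auto intro!: integrable_measure_pmf_finite)

lemma iexp_split: "iexp (real m * x + real k * y) = iexp x ^ m * iexp y ^ k"
proof -
  have "\<i> * complex_of_real (real m * x + real k * y) = of_nat m * (\<i> * complex_of_real x) + of_nat k * (\<i> * complex_of_real y)"
    by (simp add: algebra_simps)
  then show ?thesis unfolding exp_add[symmetric] exp_of_nat_mult[symmetric] by simp
qed

lemma char_bmeas:
  assumes q: "0 \<le> q" "q \<le> 1"
  shows "char (bmeas n q) t = (complex_of_real q * iexp ((1 - q) * (t / sqrt (real n))) + complex_of_real (1 - q) * iexp (- (q * (t / sqrt (real n)))))^n"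
proof -
  define s where "s = t / sqrt (real n)"
  have "char (bmeas n q) t = measure_pmf.expectation (binomial_pmf n q) (\<lambda>m. iexp (t * ((real m - real n * q) / sqrt (real n))))"
    unfolding char_def bmeas_def by (simp add: integral_distr)
  also have "\<dots> = (\<Sum>m\<le>n. (real (n choose m) * q ^ m * (1 - q) ^ (n - m)) *\<^sub>R iexp (t * ((real m - real n * q) / sqrt (real n))))"
    using q by (simp add: expectation_binomial_pmf')
  also have "\<dots> = (\<Sum>m\<le>n. of_nat (n choose m) * (complex_of_real q * iexp ((1 - q) * s)) ^ m * (complex_of_real (1 - q) * iexp (- (q * s))) ^ (n - m))"
  proof (intro sum.cong refl)
    fix m assume m: "m \<in> {..n}"
    have "t * ((real m - real n * q) / sqrt (real n)) = real m * ((1 - q) * s) + real (n - m) * (- (q * s))"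
      using m by (simp add: s_def of_nat_diff algebra_simps diff_divide_distrib)
    then have "iexp (t * ((real m - real n * q) / sqrt (real n))) = iexp ((1 - q) * s) ^ m * iexp (- (q * s)) ^ (n - m)"
      by (simp only: iexp_split)
    then show "(real (n choose m) * q ^ m * (1 - q) ^ (n - m)) *\<^sub>R iexp (t * ((real m - real n * q) / sqrt (real n)))
        = of_nat (n choose m) * (complex_of_real q * iexp ((1 - q) * s)) ^ m * (complex_of_real (1 - q) * iexp (- (q * s))) ^ (n - m)"
      by (simp add: scaleR_conv_of_real power_mult_distrib)
  qed
  also have "\<dots> = (complex_of_real q * iexp ((1 - q) * s) + complex_of_real (1 - q) * iexp (- (q * s)))^n"
    by (rule binomial_ring[symmetric])
  finally show ?thesis unfolding s_def .
qed

definition psi :: "real \<Rightarrow> real \<Rightarrow> complex" where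
  "psi q s = complex_of_real q * iexp ((1 - q) * s) + complex_of_real (1 - q) * iexp (- (q * s))"

lemma iexp_P: "cmod (iexp x - (1 + \<i> * complex_of_real x - complex_of_real (x^2 / 2))) \<le> \<bar>x\<bar>^3 / 6"
proof -
  have "(\<Sum>k \<le> 2. (\<i> * complex_of_real x)^k / fact k) = 1 + \<i> * complex_of_real x - complex_of_real (x^2 / 2)"
  proof -
    have "(\<i> * complex_of_real x)^2 = - complex_of_real (x^2)"
      by (simp add: power_mult_distrib)
    then show ?thesis by (simp add: numeral_2_eq_2 fact_numeral del: power_Suc)
  qed
  then show ?thesis using iexp_approx1[of x 2] by (simp add: fact_numeral numeral_3_eq_3)
qed

lemma psi_approx:
  assumes q: "0 \<le> q" "q \<le> 1"
  shows "cmod (psi q s - complex_of_real (1 - q * (1 - q) * s^2 / 2)) \<le> \<bar>s\<bar>^3 / 6"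
proof -
  define a where "a = (1 - q) * s"
  define b where "b = - (q * s)"
  define P where "P x = 1 + \<i> * complex_of_real x - complex_of_real (x^2 / 2)" for x
  have key: "complex_of_real q * P a + complex_of_real (1 - q) * P b = complex_of_real (1 - q * (1 - q) * s^2 / 2)"
    unfolding P_def a_def b_def
    by (simp add: complex_eq_iff field_simps power2_eq_square)
  have "psi q s - complex_of_real (1 - q * (1 - q) * s^2 / 2)
      = complex_of_real q * (iexp a - P a) + complex_of_real (1 - q) * (iexp b - P b)"
    unfolding psi_def key[symmetric] a_def b_def by (simp add: algebra_simps)
  also have "cmod \<dots> \<le> q * (\<bar>a\<bar>^3 / 6) + (1 - q) * (\<bar>b\<bar>^3 / 6)"
  proof -
    have q1: "0 \<le> 1 - q" using q by simp
    have "cmod (complex_of_real q * (iexp a - P a)) = q * cmod (iexp a - P a)"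
      by (simp only: norm_mult norm_of_real abs_of_nonneg[OF q(1)])
    also have "\<dots> \<le> q * (\<bar>a\<bar>^3 / 6)"
      using q iexp_P[of a] unfolding P_def by (intro mult_left_mono) auto
    finally have 1: "cmod (complex_of_real q * (iexp a - P a)) \<le> q * (\<bar>a\<bar>^3 / 6)" .
    have "cmod (complex_of_real (1 - q) * (iexp b - P b)) = (1 - q) * cmod (iexp b - P b)"
      by (simp only: norm_mult norm_of_real abs_of_nonneg[OF q1])
    also have "\<dots> \<le> (1 - q) * (\<bar>b\<bar>^3 / 6)"
      using q iexp_P[of b] unfolding P_def by (intro mult_left_mono) auto
    finally have 2: "cmod (complex_of_real (1 - q) * (iexp b - P b)) \<le> (1 - q) * (\<bar>b\<bar>^3 / 6)" .
    show ?thesis using 1 2 by (meson norm_triangle_le add_mono)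
  qed
  also have "\<dots> \<le> q * (\<bar>s\<bar>^3 / 6) + (1 - q) * (\<bar>s\<bar>^3 / 6)"
  proof -
    have "\<bar>a\<bar> \<le> \<bar>s\<bar>" "\<bar>b\<bar> \<le> \<bar>s\<bar>" using q unfolding a_def b_def
      by (auto simp: abs_mult intro!: mult_left_le_one_le)
    then have "\<bar>a\<bar>^3 \<le> \<bar>s\<bar>^3" "\<bar>b\<bar>^3 \<le> \<bar>s\<bar>^3" by (auto intro!: power_mono)
    then show ?thesis using q by (intro add_mono mult_left_mono) auto
  qed
  also have "\<dots> = \<bar>s\<bar>^3 / 6" by (simp add: field_simps)
  finally show ?thesis .
qed

lemma psi_norm:
  assumes q: "0 \<le> q" "q \<le> 1"
  shows "cmod (psi q s) \<le> 1"
proof -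
  have "cmod (psi q s) \<le> cmod (complex_of_real q * iexp ((1 - q) * s)) + cmod (complex_of_real (1 - q) * iexp (- (q * s)))"
    unfolding psi_def by (rule norm_triangle_ineq)
  also have "\<dots> = q + (1 - q)"
  proof -
    have "cmod (complex_of_real (1 - q)) = 1 - q" using q by (simp only: norm_of_real)
    then show ?thesis using q by (simp add: norm_mult del: of_real_diff)
  qed
  finally show ?thesis by simp
qed


lemma q_quarter: "0 \<le> q \<Longrightarrow> q \<le> 1 \<Longrightarrow> 0 \<le> q * (1 - q) \<and> q * (1 - q) \<le> (1::real) / 4"
proof -
  assume q: "0 \<le> q" "q \<le> 1"
  have a: "0 \<le> q * (1 - q)" using q by simp
  have "(q - 1/2)^2 \<ge> 0" by simp
  then have b: "q * (1 - q) \<le> 1/4" by (simp add: power2_eq_square algebra_simps)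
  show ?thesis using a b by simp
qed

lemma sqrt_ns_at_top:
  assumes ns: "filterlim ns at_top sequentially"
  shows "filterlim (\<lambda>j. sqrt (real (ns j))) at_top sequentially"
  using filterlim_compose[OF sqrt_at_top filterlim_compose[OF filterlim_real_sequentially ns]] .

lemma char_conv:
  fixes ns :: "nat \<Rightarrow> nat" and qs :: "nat \<Rightarrow> real"
  assumes ns: "filterlim ns at_top sequentially" and q01: "\<And>j. 0 \<le> qs j \<and> qs j \<le> 1"
    and qlim: "qs \<longlonglongrightarrow> q0" and q0: "0 \<le> q0" "q0 \<le> 1"
  shows "(\<lambda>j. char (bmeas (ns j) (qs j)) t) \<longlonglongrightarrow> complex_of_real (exp (- (q0 * (1 - q0) * t^2 / 2)))"
proof -
  define v where "v j = qs j * (1 - qs j)" for j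
  define v0 where "v0 = q0 * (1 - q0)"
  have vlim: "v \<longlonglongrightarrow> v0" unfolding v_def v0_def by (intro tendsto_intros qlim)
  have v14: "0 \<le> v j \<and> v j \<le> 1/4" for j unfolding v_def using q01[of j] q_quarter by blast
  have v014: "0 \<le> v0 \<and> v0 \<le> 1/4" unfolding v0_def using q0 q_quarter by blast
  define c where "c j = char (bmeas (ns j) (qs j)) t" for j
  define w where "w j = 1 - v j * t^2 / (2 * real (ns j))" for j
  define z where "z j = (1 + (- (v0 * t^2 / 2)) / real (ns j)) ^ ns j" for j
  have ev_big: "eventually (\<lambda>j. real (ns j) \<ge> t^2 + 1) sequentially"
  proof -
    have "eventually (\<lambda>j. ns j \<ge> nat \<lceil>t^2 + 1\<rceil>) sequentially"
      using ns by (simp add: filterlim_at_top)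
    then show ?thesis by eventually_elim linarith
  qed
  have small: "0 \<le> a * t^2 / (2 * real n) \<and> a * t^2 / (2 * real n) \<le> 2"
    if "0 \<le> a" "a \<le> 1/4" "real n \<ge> t^2 + 1" for a n
  proof -
    have n0: "real n > 0" using that(3) by (smt (verit) zero_le_power2)
    have "a * t^2 \<le> 1/4 * t^2" using that by (intro mult_right_mono) auto
    also have "\<dots> \<le> 2 * (2 * real n)" using that(3) by simp
    finally show ?thesis using n0 that by (auto simp: divide_le_eq)
  qed
  have s1: "eventually (\<lambda>j. norm (c j - complex_of_real (w j ^ ns j)) \<le> \<bar>t\<bar>^3 / 6 * inverse (sqrt (real (ns j)))) sequentially"
    using ev_big
  proof eventually_elim
    case (elim j)
    define n where "n = ns j"
    define s where "s = t / sqrt (real n)"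
    have n0: "real n > 0" using elim unfolding n_def by (smt (verit) zero_le_power2)
    have cj: "c j = psi (qs j) s ^ n" unfolding c_def n_def s_def psi_def using q01[of j] by (simp add: char_bmeas)
    have ws: "w j = 1 - qs j * (1 - qs j) * s^2 / 2"
      unfolding w_def v_def s_def n_def[symmetric] using n0 by (simp add: power_divide)
    have hX: "0 \<le> v j * t^2 / (2 * real n) \<and> v j * t^2 / (2 * real n) \<le> 2"
      using small[of "v j" n] v14[of j] elim unfolding n_def by blast
    have "\<bar>w j\<bar> \<le> 1"
      unfolding w_def n_def[symmetric] abs_le_iff using hX by linarith
    then have wn: "norm (complex_of_real (w j)) \<le> 1" by (simp only: norm_of_real)
    have "norm (c j - complex_of_real (w j ^ n)) = norm (psi (qs j) s ^ n - complex_of_real (w j) ^ n)"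
      unfolding cj by simp
    also have "\<dots> \<le> real n * norm (psi (qs j) s - complex_of_real (w j))"
      by (rule norm_power_diff[OF psi_norm wn]) (use q01[of j] in auto)
    also have "\<dots> \<le> real n * (\<bar>s\<bar>^3 / 6)"
      unfolding ws using psi_approx[of "qs j" s] q01[of j] by (intro mult_left_mono) auto
    also have "real n * (\<bar>s\<bar>^3 / 6) = \<bar>t\<bar>^3 / 6 * inverse (sqrt (real n))"
    proof -
      have "sqrt (real n) ^ 3 = real n * sqrt (real n)"
        using n0 by (simp add: power3_eq_cube)
      then show ?thesis unfolding s_def using n0
        by (simp add: abs_divide power_divide field_simps)
    qed
    finally show ?case unfolding n_def .
  qed
  have s1': "(\<lambda>j. c j - complex_of_real (w j ^ ns j)) \<longlonglongrightarrow> 0"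
  proof (rule Lim_null_comparison[OF s1])
    have "(\<lambda>j. \<bar>t\<bar>^3 / 6 * inverse (sqrt (real (ns j)))) \<longlonglongrightarrow> \<bar>t\<bar>^3 / 6 * 0"
      by (intro tendsto_mult tendsto_const tendsto_inverse_0_at_top sqrt_ns_at_top[OF ns])
    then show "(\<lambda>j. \<bar>t\<bar>^3 / 6 * inverse (sqrt (real (ns j)))) \<longlonglongrightarrow> 0" by simp
  qed
  have s2: "eventually (\<lambda>j. norm (w j ^ ns j - z j) \<le> \<bar>v j - v0\<bar> * t^2 / 2) sequentially"
    using ev_big
  proof eventually_elim
    case (elim j)
    define n where "n = ns j"
    have n0: "real n > 0" using elim unfolding n_def by (smt (verit) zero_le_power2)
    have zj: "z j = (1 - v0 * t^2 / (2 * real n)) ^ n" unfolding z_def n_def by (simp add: field_simps)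
    have hX: "0 \<le> v j * t^2 / (2 * real n) \<and> v j * t^2 / (2 * real n) \<le> 2"
      using small[of "v j" n] v14[of j] elim unfolding n_def by blast
    have wn: "norm (w j) \<le> 1"
      unfolding w_def n_def[symmetric] real_norm_def abs_le_iff using hX by linarith
    have hY: "0 \<le> v0 * t^2 / (2 * real n) \<and> v0 * t^2 / (2 * real n) \<le> 2"
      using small[of v0 n] v014 elim unfolding n_def by blast
    have zn: "norm (1 - v0 * t^2 / (2 * real n)) \<le> 1"
      unfolding real_norm_def abs_le_iff using hY by linarith
    have "norm (w j ^ n - z j) \<le> real n * norm (w j - (1 - v0 * t^2 / (2 * real n)))"
      unfolding zj by (rule norm_power_diff[OF wn zn])
    also have "\<dots> = \<bar>v j - v0\<bar> * t^2 / 2"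
    proof -
      have "w j - (1 - v0 * t^2 / (2 * real n)) = (v0 - v j) * (t^2 / (2 * real n))"
        unfolding w_def n_def[symmetric] using n0 by (simp add: field_simps)
      then have "norm (w j - (1 - v0 * t^2 / (2 * real n))) = \<bar>v j - v0\<bar> * (t^2 / (2 * real n))"
        using n0 by (simp add: abs_mult abs_minus_commute)
      then show ?thesis using n0 by simp
    qed
    finally show ?case unfolding n_def .
  qed
  have s2': "(\<lambda>j. w j ^ ns j - z j) \<longlonglongrightarrow> 0"
  proof (rule Lim_null_comparison[OF s2])
    have "(\<lambda>j. \<bar>v j - v0\<bar> * t^2 / 2) \<longlonglongrightarrow> \<bar>v0 - v0\<bar> * t^2 / 2"
      by (intro tendsto_intros vlim) auto
    then show "(\<lambda>j. \<bar>v j - v0\<bar> * t^2 / 2) \<longlonglongrightarrow> 0" by simp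
  qed
  have s3: "z \<longlonglongrightarrow> exp (- (v0 * t^2 / 2))"
    unfolding z_def using filterlim_compose[OF tendsto_exp_limit_sequentially ns] .
  have "(\<lambda>j. (c j - complex_of_real (w j ^ ns j)) + complex_of_real (w j ^ ns j - z j) + complex_of_real (z j))
      \<longlonglongrightarrow> 0 + complex_of_real 0 + complex_of_real (exp (- (v0 * t^2 / 2)))"
    by (intro tendsto_add s1' tendsto_of_real s2' s3)
  then show ?thesis unfolding c_def v0_def by simp
qed

definition normN :: "real \<Rightarrow> real measure" where
  "normN \<sigma> = distr std_normal_distribution borel (\<lambda>x. \<sigma> * x)"

lemma normN_real_distribution: "real_distribution (normN \<sigma>)"
proof -
  interpret real_distribution std_normal_distribution by (rule real_dist_normal_dist)
  show ?thesis unfolding normN_def by (rule real_distribution_distr) simp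
qed

lemma char_normN: "char (normN \<sigma>) t = complex_of_real (exp (- (\<sigma>^2 * t^2 / 2)))"
proof -
  have "char (normN \<sigma>) t = char std_normal_distribution (t * \<sigma>)"
    unfolding char_def normN_def by (subst integral_distr) (auto simp: mult.assoc)
  also have "\<dots> = complex_of_real (exp (- (\<sigma>^2 * t^2 / 2)))"
    by (simp add: char_std_normal_distribution power_mult_distrib mult.commute)
  finally show ?thesis .
qed

lemma weak_conv_bmeas:
  fixes ns :: "nat \<Rightarrow> nat" and qs :: "nat \<Rightarrow> real"
  assumes ns: "filterlim ns at_top sequentially" and q01: "\<And>j. 0 \<le> qs j \<and> qs j \<le> 1"
    and qlim: "qs \<longlonglongrightarrow> q0" and q0: "0 \<le> q0" "q0 \<le> 1"
  shows "weak_conv_m (\<lambda>j. bmeas (ns j) (qs j)) (normN (sqrt (q0 * (1 - q0))))"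
proof (rule levy_continuity)
  show "real_distribution (bmeas (ns j) (qs j))" for j by (rule bmeas_real_distribution)
  show "real_distribution (normN (sqrt (q0 * (1 - q0))))" by (rule normN_real_distribution)
  fix t
  have "(sqrt (q0 * (1 - q0)))^2 = q0 * (1 - q0)" using q0 by simp
  then show "(\<lambda>j. char (bmeas (ns j) (qs j)) t) \<longlonglongrightarrow> char (normN (sqrt (q0 * (1 - q0)))) t"
    unfolding char_normN using char_conv[OF ns q01 qlim q0] by simp
qed


lemma fn_integral:
  assumes q: "0 \<le> q" "q \<le> 1"
  shows "fn u n q = integral\<^sup>L (bmeas n q) (\<lambda>x. \<bar>x\<bar> powr u)"
  unfolding fn_def using q by (subst bmeas_integral) auto

lemma bmeas_sq:
  assumes q: "0 \<le> q" "q \<le> 1" and n: "n \<ge> 1"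
  shows "integral\<^sup>L (bmeas n q) (\<lambda>x. x^2) = q * (1 - q)"
proof -
  have "integral\<^sup>L (bmeas n q) (\<lambda>x. x^2) = bsum n q (\<lambda>t. (1 / real n) * (real t - real n * q)^2)"
    using q by (subst bmeas_integral) (auto simp: power_divide intro!: bsum_cong)
  also have "\<dots> = (1 / real n) * (real n * q * (1 - q))"
    by (simp only: bsum_cmult bsum_var)
  also have "\<dots> = q * (1 - q)" using n by simp
  finally show ?thesis .
qed

lemma normN_abs_moment:
  assumes u: "u > 0" and s: "\<sigma> \<ge> 0"
  shows "integrable (normN \<sigma>) (\<lambda>x. \<bar>x\<bar> powr u)"
    and "integral\<^sup>L (normN \<sigma>) (\<lambda>x. \<bar>x\<bar> powr u) = \<sigma> powr u * Cu u"
proof -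
  have h: "has_bochner_integral std_normal_distribution (\<lambda>x. \<bar>x\<bar> powr u) (Cu u)"
    by (rule std_abs_moment[OF u])
  have eq: "(\<lambda>x. \<bar>\<sigma> * x\<bar> powr u) = (\<lambda>x. \<sigma> powr u * \<bar>x\<bar> powr u)"
    using s by (simp add: abs_mult powr_mult)
  have "integrable std_normal_distribution (\<lambda>x. \<bar>\<sigma> * x\<bar> powr u)"
    unfolding eq using h by (simp add: has_bochner_integral_iff)
  then show "integrable (normN \<sigma>) (\<lambda>x. \<bar>x\<bar> powr u)"
    unfolding normN_def by (subst integrable_distr_eq) auto
  have "integral\<^sup>L (normN \<sigma>) (\<lambda>x. \<bar>x\<bar> powr u) = integral\<^sup>L std_normal_distribution (\<lambda>x. \<bar>\<sigma> * x\<bar> powr u)"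
    unfolding normN_def by (subst integral_distr) auto
  also have "\<dots> = \<sigma> powr u * Cu u"
    unfolding eq using h by (simp add: has_bochner_integral_iff)
  finally show "integral\<^sup>L (normN \<sigma>) (\<lambda>x. \<bar>x\<bar> powr u) = \<sigma> powr u * Cu u" .
qed

lemma normN_sq:
  shows "integrable (normN \<sigma>) (\<lambda>x. x^2)"
    and "integral\<^sup>L (normN \<sigma>) (\<lambda>x. x^2) = \<sigma>^2"
proof -
  have m: "integrable std_normal_distribution (\<lambda>x. x^2)"
    "(LINT x|std_normal_distribution. x^2) = 1"
    using std_normal_distribution_even_moments[of 1] by (simp_all add: fact_numeral)
  have eq: "(\<lambda>x. (\<sigma> * x)^2) = (\<lambda>x. \<sigma>^2 * x^2)" by (simp add: power_mult_distrib)
  show "integrable (normN \<sigma>) (\<lambda>x. x^2)"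
    unfolding normN_def using m by (subst integrable_distr_eq) (auto simp: eq)
  show "integral\<^sup>L (normN \<sigma>) (\<lambda>x. x^2) = \<sigma>^2"
    unfolding normN_def using m by (subst integral_distr) (auto simp: eq)
qed

definition trunc :: "real \<Rightarrow> real \<Rightarrow> real \<Rightarrow> real" where
  "trunc u R x = (min \<bar>x\<bar> R) powr u"

lemma trunc_cont: "u > 0 \<Longrightarrow> R \<ge> 0 \<Longrightarrow> isCont (trunc u R) x"
proof -
  assume u: "u > 0" and R: "R \<ge> 0"
  have "continuous_on UNIV (\<lambda>x. (min \<bar>x\<bar> R) powr u)"
    by (rule continuous_on_powr') (use u R in \<open>auto intro!: continuous_intros\<close>)
  then show ?thesis unfolding trunc_def by (simp add: continuous_on_eq_continuous_at)
qed

lemma trunc_bound: "R > 0 \<Longrightarrow> u > 0 \<Longrightarrow> norm (trunc u R x) \<le> R powr u"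
  unfolding trunc_def by (auto intro!: powr_mono2 simp: min_def)

lemma trunc_meas [measurable]: "trunc u R \<in> borel_measurable borel"
  unfolding trunc_def by measurable

lemma trunc_err:
  assumes u: "0 < u" "u \<le> 2" and R: "R > 0"
  shows "0 \<le> \<bar>x\<bar> powr u - trunc u R x \<and> \<bar>x\<bar> powr u - trunc u R x \<le> R powr (u - 2) * x^2"
proof (cases "\<bar>x\<bar> \<le> R")
  case True
  then show ?thesis by (simp add: trunc_def min_def)
next
  case False
  then have xR: "\<bar>x\<bar> > R" by simp
  have t: "trunc u R x = R powr u" using xR unfolding trunc_def by simp
  have a: "R powr u \<le> \<bar>x\<bar> powr u" using xR R u by (intro powr_mono2) auto
  have p1: "\<bar>x\<bar> powr ((u - 2) + 2) = \<bar>x\<bar> powr (u - 2) * \<bar>x\<bar> powr 2"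
    by (rule powr_add)
  have p2: "\<bar>x\<bar> powr 2 = x^2" using xR R by (simp add: powr_numeral)
  have "\<bar>x\<bar> powr u = \<bar>x\<bar> powr (u - 2) * x^2" using p1 p2 by simp
  also have "\<bar>x\<bar> powr (u - 2) \<le> R powr (u - 2)"
    using xR R u by (intro powr_mono2') auto
  then have "\<bar>x\<bar> powr (u - 2) * x^2 \<le> R powr (u - 2) * x^2"
    by (intro mult_right_mono) auto
  finally have b: "\<bar>x\<bar> powr u \<le> R powr (u - 2) * x^2" .
  show ?thesis unfolding t using a b powr_ge_zero[of R u] by linarith
qed

lemma trunc_gap:
  assumes M: "real_distribution M" and i1: "integrable M (\<lambda>x. \<bar>x\<bar> powr u)"
    and i2: "integrable M (\<lambda>x. x^2)" and v: "integral\<^sup>L M (\<lambda>x. x^2) \<le> 1/4"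
    and u: "0 < u" "u \<le> 2" and R: "R > 0"
  shows "\<bar>integral\<^sup>L M (\<lambda>x. \<bar>x\<bar> powr u) - integral\<^sup>L M (trunc u R)\<bar> \<le> R powr (u - 2) / 4"
proof -
  interpret real_distribution M by (rule M)
  have it: "integrable M (trunc u R)"
    by (rule integrable_const_bound[where B = "R powr u"]) (use trunc_bound[OF R u(1)] in auto)
  have "integral\<^sup>L M (\<lambda>x. \<bar>x\<bar> powr u) - integral\<^sup>L M (trunc u R) = integral\<^sup>L M (\<lambda>x. \<bar>x\<bar> powr u - trunc u R x)"
    using i1 it by (rule Bochner_Integration.integral_diff[symmetric])
  moreover have "0 \<le> integral\<^sup>L M (\<lambda>x. \<bar>x\<bar> powr u - trunc u R x)"
    using trunc_err[OF u R] by (intro integral_nonneg_AE) auto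
  moreover have "integral\<^sup>L M (\<lambda>x. \<bar>x\<bar> powr u - trunc u R x) \<le> integral\<^sup>L M (\<lambda>x. R powr (u - 2) * x^2)"
    using trunc_err[OF u R] i1 it i2 by (intro integral_mono) auto
  moreover have "integral\<^sup>L M (\<lambda>x. R powr (u - 2) * x^2) = R powr (u - 2) * integral\<^sup>L M (\<lambda>x. x^2)"
    by simp
  moreover have "R powr (u - 2) * integral\<^sup>L M (\<lambda>x. x^2) \<le> R powr (u - 2) * (1/4)"
    using v by (intro mult_left_mono) auto
  ultimately show ?thesis by simp
qed

lemma Cu2: "Cu 2 = 1"
proof -
  have "Gamma (3/2 :: real) = Gamma (1/2 + 1)" by simp
  also have "\<dots> = 1/2 * Gamma (1/2 :: real)"
    by (rule Gamma_plus1) (auto dest: nonpos_Ints_nonpos)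
  finally have "Gamma (3/2 :: real) = sqrt pi / 2" by (simp add: Gamma_one_half_real)
  then show ?thesis unfolding Cu_def by simp
qed

lemma abs_powr_2: "\<bar>y\<bar> powr 2 = (y::real)^2"
  by (cases "y = 0") (simp_all add: powr_numeral)

lemma fn2: "n \<ge> 1 \<Longrightarrow> fn 2 n q = q * (1 - q)"
proof -
  assume n: "n \<ge> 1"
  have "fn 2 n q = bsum n q (\<lambda>t. (1 / real n) * (real t - real n * q)^2)"
    unfolding fn_def using n
    by (intro bsum_cong) (simp add: abs_powr_2 power_divide)
  also have "\<dots> = (1 / real n) * (real n * q * (1 - q))"
    by (simp only: bsum_cmult bsum_var)
  also have "\<dots> = q * (1 - q)" using n by simp
  finally show ?thesis .
qed

lemma fn_conv:
  fixes ns :: "nat \<Rightarrow> nat" and qs :: "nat \<Rightarrow> real"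
  assumes u: "0 < u" "u \<le> 2" and ns: "filterlim ns at_top sequentially" and q01: "\<And>j. 0 \<le> qs j \<and> qs j \<le> 1"
    and qlim: "qs \<longlonglongrightarrow> q0" and q0: "0 \<le> q0" "q0 \<le> 1"
  shows "(\<lambda>j. fn u (ns j) (qs j)) \<longlonglongrightarrow> Cu u * (q0 * (1 - q0)) powr (u / 2)"
proof -
  have ev1: "eventually (\<lambda>j. ns j \<ge> 1) sequentially"
    using ns by (simp add: filterlim_at_top)
  have v0: "0 \<le> q0 * (1 - q0) \<and> q0 * (1 - q0) \<le> 1/4" using q_quarter q0 by blast
  show ?thesis
  proof (cases "u = 2")
    case True
    have "(\<lambda>j. qs j * (1 - qs j)) \<longlonglongrightarrow> q0 * (1 - q0)" by (intro tendsto_intros qlim)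
    moreover have "eventually (\<lambda>j. qs j * (1 - qs j) = fn u (ns j) (qs j)) sequentially"
      using ev1 by eventually_elim (simp add: True fn2)
    ultimately have "(\<lambda>j. fn u (ns j) (qs j)) \<longlonglongrightarrow> q0 * (1 - q0)"
      by (rule Lim_transform_eventually)
    then show ?thesis using True v0 by (simp add: Cu2)
  next
    case False
    then have u2: "u < 2" using u by simp
    define \<sigma> where "\<sigma> = sqrt (q0 * (1 - q0))"
    have v0a: "0 \<le> q0 * (1 - q0)" using v0 by simp
    have \<sigma>0: "\<sigma> \<ge> 0" unfolding \<sigma>_def using v0a by simp
    have \<sigma>2: "\<sigma>^2 = q0 * (1 - q0)" unfolding \<sigma>_def using v0a by simp
    define L where "L = integral\<^sup>L (normN \<sigma>) (\<lambda>x. \<bar>x\<bar> powr u)"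
    have L: "L = Cu u * (q0 * (1 - q0)) powr (u / 2)"
    proof -
      have "\<sigma> powr u = (q0 * (1 - q0)) powr (u / 2)"
        unfolding \<sigma>_def using v0a by (simp add: powr_half_sqrt[symmetric] powr_powr)
      then show ?thesis unfolding L_def normN_abs_moment(2)[OF u(1) \<sigma>0] by simp
    qed
    have wc: "weak_conv_m (\<lambda>j. bmeas (ns j) (qs j)) (normN \<sigma>)"
      unfolding \<sigma>_def by (rule weak_conv_bmeas[OF ns q01 qlim q0])
    show ?thesis unfolding L[symmetric]
    proof (rule tendstoI)
      fix \<epsilon> :: real assume \<epsilon>: "\<epsilon> > 0"
      define R where "R = (\<epsilon> / 2) powr (1 / (u - 2))"
      have R: "R > 0" unfolding R_def using \<epsilon> by simp
      have Rp: "R powr (u - 2) = \<epsilon> / 2"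
        unfolding R_def using \<epsilon> u2 by (simp add: powr_powr)
      have conv: "(\<lambda>j. integral\<^sup>L (bmeas (ns j) (qs j)) (trunc u R)) \<longlonglongrightarrow> integral\<^sup>L (normN \<sigma>) (trunc u R)"
        by (rule weak_conv_imp_integral_bdd_continuous_conv[OF bmeas_real_distribution normN_real_distribution wc])
           (use trunc_cont[OF u(1)] R trunc_bound[OF R u(1)] in auto)
      then have ev2: "eventually (\<lambda>j. dist (integral\<^sup>L (bmeas (ns j) (qs j)) (trunc u R)) (integral\<^sup>L (normN \<sigma>) (trunc u R)) < \<epsilon> / 4) sequentially"
        using \<epsilon> by (intro tendstoD) auto
      have gapN: "\<bar>L - integral\<^sup>L (normN \<sigma>) (trunc u R)\<bar> \<le> R powr (u - 2) / 4"
        unfolding L_def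
        by (rule trunc_gap[OF normN_real_distribution normN_abs_moment(1)[OF u(1) \<sigma>0] normN_sq(1) _ u R])
           (use \<sigma>2 v0 normN_sq(2) in simp)
      show "eventually (\<lambda>j. dist (fn u (ns j) (qs j)) L < \<epsilon>) sequentially"
        using ev2 ev1
      proof eventually_elim
        case (elim j)
        have gapj: "\<bar>fn u (ns j) (qs j) - integral\<^sup>L (bmeas (ns j) (qs j)) (trunc u R)\<bar> \<le> R powr (u - 2) / 4"
          unfolding fn_integral[OF conjunct1[OF q01[of j]] conjunct2[OF q01[of j]]]
        proof (rule trunc_gap[OF bmeas_real_distribution _ _ _ u R])
          show "integrable (bmeas (ns j) (qs j)) (\<lambda>x. \<bar>x\<bar> powr u)"
            using q01[of j] by (intro bmeas_integrable) auto
          show "integrable (bmeas (ns j) (qs j)) (\<lambda>x. x^2)"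
            using q01[of j] by (intro bmeas_integrable) auto
          show "integral\<^sup>L (bmeas (ns j) (qs j)) (\<lambda>x. x^2) \<le> 1/4"
            using bmeas_sq[of "qs j" "ns j"] q01[of j] elim q_quarter[of "qs j"] by simp
        qed
        show ?case using elim(1) gapj gapN Rp unfolding dist_real_def abs_less_iff abs_le_iff by linarith
      qed
    qed
  qed
qed


definition FF :: "real \<Rightarrow> real \<Rightarrow> real" where
  "FF u q = Cu u * (q * (1 - q)) powr (u / 2)"

lemma Cu_nonneg: "u > 0 \<Longrightarrow> Cu u \<ge> 0"
  unfolding Cu_def using Gamma_real_pos[of "(u + 1) / 2"] by simp

lemma powr_tangent:
  fixes s M y :: real
  assumes s: "0 < s" "s \<le> 1" and M: "M > 0" and y: "y \<ge> 0"
  shows "y powr s \<le> M powr s + s * M powr (s - 1) * (y - M)"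
proof -
  define t where "t = y / M"
  have t0: "t \<ge> 0" unfolding t_def using y M by simp
  have bt: "t powr s \<le> s * t + (1 - s)"
  proof (cases "t = 0")
    case True then show ?thesis using s by simp
  next
    case False
    then have "t > 0" using t0 by simp
    then have "t powr s * 1 powr (1 - s) \<le> s * t + (1 - s) * 1"
      using s by (intro Youngs_inequality_0) auto
    then show ?thesis by simp
  qed
  have "y powr s = M powr s * t powr s"
    unfolding t_def using M y by (simp add: powr_divide)
  also have "\<dots> \<le> M powr s * (s * t + (1 - s))"
    using bt by (intro mult_left_mono) auto
  also have "M powr s * (s * t + (1 - s)) = M powr s + s * (M powr s / M) * (y - M)"
    unfolding t_def using M by (simp add: field_simps)
  also have "M powr s / M = M powr (s - 1)"
    using M by (simp add: powr_diff)
  finally show ?thesis .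
qed

lemma FF_tangent:
  assumes u: "0 < u" "u \<le> 2" and m: "0 < m" "m < 1" and x: "0 \<le> x" "x \<le> 1"
  shows "FF u x \<le> FF u m + Cu u * (u / 2) * (m * (1 - m)) powr (u / 2 - 1) * (1 - 2 * m) * (x - m)"
proof -
  have M: "m * (1 - m) > 0" using m by simp
  have y: "x * (1 - x) \<ge> 0" using x by simp
  have "(x * (1 - x)) powr (u / 2) \<le> (m * (1 - m)) powr (u / 2) + (u / 2) * (m * (1 - m)) powr (u / 2 - 1) * (x * (1 - x) - m * (1 - m))"
    by (rule powr_tangent) (use u M y in auto)
  also have "\<dots> \<le> (m * (1 - m)) powr (u / 2) + (u / 2) * (m * (1 - m)) powr (u / 2 - 1) * ((1 - 2 * m) * (x - m))"
  proof -
    have "x * (1 - x) - m * (1 - m) = (1 - 2 * m) * (x - m) - (x - m)^2"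
      by (simp add: power2_eq_square algebra_simps)
    then have "x * (1 - x) - m * (1 - m) \<le> (1 - 2 * m) * (x - m)" by simp
    then show ?thesis using u by (intro add_left_mono mult_left_mono) auto
  qed
  finally have "Cu u * (x * (1 - x)) powr (u / 2) \<le> Cu u * ((m * (1 - m)) powr (u / 2) + (u / 2) * (m * (1 - m)) powr (u / 2 - 1) * ((1 - 2 * m) * (x - m)))"
    using Cu_nonneg[OF u(1)] by (intro mult_left_mono) auto
  then show ?thesis unfolding FF_def by (simp add: algebra_simps)
qed

lemma FF_jensen:
  assumes u: "0 < u" "u \<le> 2" and m: "0 < m" "m < 1" and fin: "finite I"
    and x: "\<And>i. i \<in> I \<Longrightarrow> 0 \<le> x i \<and> x i \<le> 1" and sx: "(\<Sum>i\<in>I. x i) = real (card I) * m"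
  shows "(\<Sum>i\<in>I. FF u (x i)) \<le> real (card I) * FF u m"
proof -
  define c where "c = Cu u * (u / 2) * (m * (1 - m)) powr (u / 2 - 1) * (1 - 2 * m)"
  have "(\<Sum>i\<in>I. FF u (x i)) \<le> (\<Sum>i\<in>I. FF u m + c * (x i - m))"
    using FF_tangent[OF u m] x unfolding c_def by (intro sum_mono) (simp add: mult.assoc)
  also have "\<dots> = real (card I) * FF u m + c * ((\<Sum>i\<in>I. x i) - real (card I) * m)"
    by (simp add: sum.distrib sum_distrib_left sum_subtractf algebra_simps)
  also have "\<dots> = real (card I) * FF u m" using sx by simp
  finally show ?thesis .
qed

lemma FF_cont:
  assumes u: "u > 0" and x: "x \<longlonglongrightarrow> l" and x01: "\<And>j. 0 \<le> x j \<and> x j \<le> 1"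
  shows "(\<lambda>j. FF u (x j)) \<longlonglongrightarrow> FF u l"
proof -
  have "(\<lambda>j. x j * (1 - x j)) \<longlonglongrightarrow> l * (1 - l)" by (intro tendsto_intros x)
  then have "(\<lambda>j. (x j * (1 - x j)) powr (u / 2)) \<longlonglongrightarrow> (l * (1 - l)) powr (u / 2)"
    by (rule tendsto_powr'[OF _ tendsto_const]) (use u x01 in auto)
  then show ?thesis unfolding FF_def by (rule tendsto_mult[OF tendsto_const])
qed

lemma fn_unif:
  assumes u: "0 < u" "u \<le> 2" and ab: "0 \<le> a" "b \<le> 1" and \<delta>: "\<delta> > 0"
  shows "eventually (\<lambda>n. \<forall>q\<in>{a..b}. fn u n q \<le> FF u q + \<delta>) sequentially"
proof (rule ccontr)
  assume "\<not> ?thesis"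
  then obtain r :: "nat \<Rightarrow> nat" where r: "strict_mono r" and nr: "\<And>j. \<not> (\<forall>q\<in>{a..b}. fn u (r j) q \<le> FF u q + \<delta>)"
    using not_eventually_sequentiallyD by blast
  then have "\<forall>j. \<exists>q. q \<in> {a..b} \<and> fn u (r j) q > FF u q + \<delta>" by (meson not_le)
  then obtain qq where qq: "\<And>j. qq j \<in> {a..b}" and qgt: "\<And>j. fn u (r j) (qq j) > FF u (qq j) + \<delta>"
    by metis
  obtain l s where l: "l \<in> {a..b}" and s: "strict_mono (s :: nat \<Rightarrow> nat)" and ls: "(qq \<circ> s) \<longlonglongrightarrow> l"
    using seq_compactE[OF compact_imp_seq_compact[OF compact_Icc], of qq a b] qq by blast
  have q01: "0 \<le> (qq \<circ> s) j \<and> (qq \<circ> s) j \<le> 1" for j using qq[of "s j"] ab by auto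
  have l01: "0 \<le> l" "l \<le> 1" using l ab by auto
  have ns: "filterlim (r \<circ> s) at_top sequentially"
    using filterlim_subseq[OF strict_mono_o[OF r s]] by (simp add: filterlim_sequentially_iff_filterlim_real)
  have c1: "(\<lambda>j. fn u ((r \<circ> s) j) ((qq \<circ> s) j)) \<longlonglongrightarrow> FF u l"
    unfolding FF_def by (rule fn_conv[OF u ns q01 ls l01])
  have c2: "(\<lambda>j. FF u ((qq \<circ> s) j)) \<longlonglongrightarrow> FF u l"
    by (rule FF_cont[OF u(1) ls q01])
  have "(\<lambda>j. fn u ((r \<circ> s) j) ((qq \<circ> s) j) - FF u ((qq \<circ> s) j)) \<longlonglongrightarrow> FF u l - FF u l"
    by (rule tendsto_diff[OF c1 c2])
  moreover have "\<forall>j\<ge>0. \<delta> \<le> fn u ((r \<circ> s) j) ((qq \<circ> s) j) - FF u ((qq \<circ> s) j)"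
  proof (intro allI impI)
    fix j :: nat
    show "\<delta> \<le> fn u ((r \<circ> s) j) ((qq \<circ> s) j) - FF u ((qq \<circ> s) j)"
      using qgt[of "s j"] by simp
  qed
  ultimately have "\<delta> \<le> FF u l - FF u l" by (intro LIMSEQ_le_const) auto
  then show False using \<delta> by simp
qed


context model
begin

lemma bet_lt_alph: "be < al"
proof -
  have "A * (al - be) > 0" using A_diff by simp
  then show ?thesis using A_pos by (simp add: zero_less_mult_iff)
qed

lemma uniform_simplex: "(\<lambda>i. 1 / real k) \<in> prob_simplex k"
  unfolding prob_simplex_def using k2 by auto

lemma qv_range:
  assumes p: "p \<in> prob_simplex k" and i: "i \<in> {1..k}"
  shows "be + (al - be) * p i \<in> {be..al}"
proof -
  have p01: "0 \<le> p i" "p i \<le> 1"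
  proof -
    show "0 \<le> p i" using p i by (simp add: prob_simplex_def)
    have "p i \<le> (\<Sum>j\<in>{1..k}. p j)"
      using p i by (intro member_le_sum) (auto simp: prob_simplex_def)
    then show "p i \<le> 1" using p by (simp add: prob_simplex_def)
  qed
  have "0 \<le> (al - be) * p i" using bet_lt_alph p01 by simp
  moreover have "(al - be) * p i \<le> (al - be) * 1" using bet_lt_alph p01 by (intro mult_left_mono) auto
  ultimately show ?thesis by simp
qed

lemma qv_sum:
  assumes p: "p \<in> prob_simplex k"
  shows "(\<Sum>i\<in>{1..k}. be + (al - be) * p i) = real (card {1..k}) * (real d / real k)"
proof -
  have "(\<Sum>i\<in>{1..k}. be + (al - be) * p i) = real k * be + (al - be)"
    using p by (simp add: sum.distrib sum_distrib_left[symmetric] prob_simplex_def)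
  also have "\<dots> = real k * (be + (al - be) / real k)" using k2 by (simp add: field_simps)
  also have "be + (al - be) / real k = real d / real k" by (rule qs)
  finally show ?thesis by simp
qed

lemma m01: "0 < real d / real k" "real d / real k < 1"
  using dpos kd by auto

lemma T_eq:
  assumes u: "u > 0"
  shows "A powr u * real k * FF u (real d / real k) = real k * Cu u * Mconst k eps d powr (u / 2)"
proof -
  have "be + (al - be) / real k = real d / real k" by (rule qs)
  then have Mc: "Mconst k eps d = A^2 * ((real d / real k) * (1 - real d / real k))"
    using M unfolding Mconst_def dobj_def by simp
  have m0: "0 \<le> (real d / real k) * (1 - real d / real k)" using m01 by simp
  have "Mconst k eps d powr (u / 2) = (A^2) powr (u / 2) * ((real d / real k) * (1 - real d / real k)) powr (u / 2)"
    unfolding Mc by (rule powr_mult; simp add: m0)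
  also have "(A^2) powr (u / 2) = A powr u"
  proof -
    have "A^2 = A powr 2" using A_pos by (simp add: powr_numeral)
    then have "(A^2) powr (u / 2) = (A powr 2) powr (u / 2)" by simp
    also have "\<dots> = A powr (2 * (u / 2))" by (rule powr_powr)
    also have "2 * (u / 2) = u" by simp
    finally show ?thesis .
  qed
  finally show ?thesis unfolding FF_def by (simp add: algebra_simps)
qed

lemma scaled_loss:
  assumes p: "p \<in> prob_simplex k" and n: "n \<ge> 1"
  shows "real n powr (u / 2) * exp_loss k eps d u n p = A powr u * (\<Sum>i\<in>{1..k}. fn u n (be + (al - be) * p i))"
proof -
  have "real n powr (u / 2) * real n powr (- u / 2) = 1"
    using n by (simp add: powr_add[symmetric])
  then show ?thesis unfolding exp_loss_eq[OF p n] by (simp add: algebra_simps)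
qed

lemma main_limit:
  assumes u: "0 < u" "u \<le> 2"
  shows "(\<lambda>n. real n powr (u / 2) * risk k eps d u n) \<longlonglongrightarrow> real k * Cu u * Mconst k eps d powr (u / 2)"
proof -
  define m where "m = real d / real k"
  have m: "0 < m" "m < 1" unfolding m_def using m01 by auto
  define Au where "Au = A powr u"
  have Au: "Au > 0" unfolding Au_def using A_pos by simp
  have kpos: "real k > 0" using k2 by simp
  define T where "T = Au * real k * FF u m"
  have T: "T = real k * Cu u * Mconst k eps d powr (u / 2)"
    unfolding T_def Au_def m_def by (rule T_eq[OF u(1)])
  have lim_m: "(\<lambda>n. fn u n m) \<longlonglongrightarrow> FF u m"
    unfolding FF_def by (rule fn_conv[OF u filterlim_ident]) (use m in auto)
  have unif_m: "be + (al - be) * (1 / real k) = m"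
    using qs unfolding m_def by simp
  show ?thesis unfolding T[symmetric]
  proof (rule tendstoI)
    fix \<epsilon> :: real assume \<epsilon>: "\<epsilon> > 0"
    define \<delta> where "\<delta> = \<epsilon> / (2 * Au * real k)"
    have \<delta>: "\<delta> > 0" unfolding \<delta>_def using \<epsilon> Au kpos by simp
    have ev_up: "eventually (\<lambda>n. \<forall>q\<in>{be..al}. fn u n q \<le> FF u q + \<delta>) sequentially"
      by (rule fn_unif[OF u _ _ \<delta>]) (use be_pos al_lt1 in auto)
    have ev_low: "eventually (\<lambda>n. dist (fn u n m) (FF u m) < \<delta>) sequentially"
      by (rule tendstoD[OF lim_m \<delta>])
    have ev1: "eventually (\<lambda>n. n \<ge> 1) sequentially" by (rule eventually_ge_at_top)
    show "eventually (\<lambda>n. dist (real n powr (u / 2) * risk k eps d u n) T < \<epsilon>) sequentially"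
      using ev_up ev_low ev1
    proof eventually_elim
      case (elim n)
      have npos: "real n powr (u / 2) > 0" using elim(3) by simp
      define U where "U = Au * real k * (FF u m + \<delta>)"
      have up: "real n powr (u / 2) * exp_loss k eps d u n p \<le> U" if p: "p \<in> prob_simplex k" for p
      proof -
        have qr: "be + (al - be) * p i \<in> {be..al}" if "i \<in> {1..k}" for i using qv_range[OF p that] .
        have "(\<Sum>i\<in>{1..k}. fn u n (be + (al - be) * p i)) \<le> (\<Sum>i\<in>{1..k}. FF u (be + (al - be) * p i) + \<delta>)"
          using elim(1) qr by (intro sum_mono) auto
        also have "\<dots> = (\<Sum>i\<in>{1..k}. FF u (be + (al - be) * p i)) + real k * \<delta>"
          by (simp add: sum.distrib)
        also have "(\<Sum>i\<in>{1..k}. FF u (be + (al - be) * p i)) \<le> real (card {1..k}) * FF u m"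
        proof (rule FF_jensen[OF u m])
          show "(\<Sum>i\<in>{1..k}. be + (al - be) * p i) = real (card {1..k}) * m"
            unfolding m_def by (rule qv_sum[OF p])
          fix i assume "i \<in> {1..k}"
          then show "0 \<le> be + (al - be) * p i \<and> be + (al - be) * p i \<le> 1"
            using qr[of i] be_pos al_lt1 by auto
        qed simp
        finally have "(\<Sum>i\<in>{1..k}. fn u n (be + (al - be) * p i)) \<le> real k * (FF u m + \<delta>)"
          by (simp add: algebra_simps)
        then show ?thesis unfolding scaled_loss[OF p elim(3)] U_def Au_def[symmetric]
          using Au by (simp add: mult.assoc mult_left_mono)
      qed
      have up': "exp_loss k eps d u n p \<le> U / real n powr (u / 2)" if "p \<in> prob_simplex k" for p
        using up[OF that] npos by (simp add: field_simps)
      have bdd: "bdd_above ((\<lambda>p. exp_loss k eps d u n p) ` prob_simplex k)"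
        using up' by (intro bdd_aboveI2) auto
      have ne: "prob_simplex k \<noteq> {}" using uniform_simplex by auto
      have r_up: "risk k eps d u n \<le> U / real n powr (u / 2)"
        unfolding risk_def using up' ne by (intro cSUP_least) auto
      have r_low: "exp_loss k eps d u n (\<lambda>i. 1 / real k) \<le> risk k eps d u n"
        unfolding risk_def using bdd uniform_simplex by (rule cSUP_upper2) simp
      have low_val: "real n powr (u / 2) * exp_loss k eps d u n (\<lambda>i. 1 / real k) = Au * real k * fn u n m"
        unfolding scaled_loss[OF uniform_simplex elim(3)] unif_m Au_def by simp
      have L: "Au * real k * fn u n m \<le> real n powr (u / 2) * risk k eps d u n"
        unfolding low_val[symmetric] using r_low npos by (intro mult_left_mono) auto
      have Uu: "real n powr (u / 2) * risk k eps d u n \<le> U"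
        using r_up npos by (simp add: field_simps)
      have d1: "Au * real k * \<bar>fn u n m - FF u m\<bar> < Au * real k * \<delta>"
        using elim(2) Au kpos by (simp add: dist_real_def)
      have d2: "Au * real k * \<delta> = \<epsilon> / 2" unfolding \<delta>_def using Au kpos by simp
      have "\<bar>real n powr (u / 2) * risk k eps d u n - T\<bar> < \<epsilon>"
      proof -
        have "Au * real k * fn u n m - T = Au * real k * (fn u n m - FF u m)"
          unfolding T_def by (simp add: algebra_simps)
        moreover have "U - T = Au * real k * \<delta>" unfolding U_def T_def by (simp add: algebra_simps)
        moreover have "- (Au * real k * \<bar>fn u n m - FF u m\<bar>) \<le> Au * real k * (fn u n m - FF u m)"
        proof -
          have "Au * real k * (- (fn u n m - FF u m)) \<le> Au * real k * \<bar>fn u n m - FF u m\<bar>"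
            using Au kpos by (intro mult_left_mono) auto
          moreover have "Au * real k * (- (fn u n m - FF u m)) = - (Au * real k * (fn u n m - FF u m))"
            by (simp only: mult_minus_right)
          ultimately show ?thesis by linarith
        qed
        ultimately show ?thesis using L Uu d1 d2 \<epsilon> unfolding abs_less_iff by linarith
      qed
      then show ?case by (simp add: dist_real_def)
    qed
  qed
qed

end

theorem theorem3:
  fixes k ds :: nat and eps u :: real
  assumes "k \<ge> 2" and "eps > 0" and "0 < u" and "u \<le> 2"
    and "ds \<in> {1..k-1}" and "\<forall>d\<in>{1..k-1}. dobj k eps ds \<le> dobj k eps d"
  shows "(\<lambda>n. risk k eps ds u n
            - real k / real n powr (u / 2) * Cu u * Mconst k eps ds powr (u / 2))
         \<in> o(\<lambda>n. real n powr (- u / 2))"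
proof -
  have mo: "model k ds eps" using assms by unfold_locales auto
  define T where "T = real k * Cu u * Mconst k eps ds powr (u / 2)"
  have lim: "(\<lambda>n. real n powr (u / 2) * risk k eps ds u n) \<longlonglongrightarrow> T"
    unfolding T_def using model.main_limit[OF mo assms(3,4)] .
  show ?thesis
  proof (rule smalloI_tendsto)
    have ev: "eventually (\<lambda>n. real n powr (u / 2) * risk k eps ds u n - T
        = (risk k eps ds u n - real k / real n powr (u / 2) * Cu u * Mconst k eps ds powr (u / 2)) / real n powr (- u / 2)) sequentially"
      using eventually_ge_at_top[of 1]
    proof eventually_elim
      case (elim n)
      then have np: "real n powr (u / 2) > 0" by simp
      have "real n powr (- u / 2) = 1 / real n powr (u / 2)"
        by (simp add: powr_minus_divide)
      then show ?case unfolding T_def using np by (simp add: field_simps)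
    qed
    have lim0: "(\<lambda>n. real n powr (u / 2) * risk k eps ds u n - T) \<longlonglongrightarrow> 0"
      using tendsto_diff[OF lim tendsto_const[of T]] by simp
    show "(\<lambda>n. (risk k eps ds u n - real k / real n powr (u / 2) * Cu u * Mconst k eps ds powr (u / 2)) / real n powr (- u / 2)) \<longlonglongrightarrow> 0"
      by (rule Lim_transform_eventually[OF lim0 ev])
    show "eventually (\<lambda>n. real n powr (- u / 2) \<noteq> 0) at_top"
      using eventually_ge_at_top[of 1] by eventually_elim simp
  qed
qed


end
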